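(* Let $C\subset(\mathbb{R}^+)^2$ be a convex body with $\epsilon\Sigma\subset C\subset\delta\Sigma$ for some $\delta>\epsilon>0$, which is a lower set (for every $n\ge1$, whenever $(j_1,j_2)\in nC\cap\mathbb{N}^2$ we have $(k_1,k_2)\in nC\cap\mathbb{N}^2$ for all integers $0\le k_l\le j_l$, $l=1,2$). Suppose $(b,0)$ and $(0,a)$ are extreme points of $C$ ($a,b>0$) and that the outer face of $C$ (the part of the topological boundary of $C$ not lying on the coordinate axes) can be written both as a graph $\{(x,f(x)):0\le x\le b\}$ and as a graph $\{(g(y),y):0\le y\le a\}$. Let $E,F\subset\mathbb{C}$ be compact and $K=E\times F$. Then $$\delta_C(K)=D(E)^{A/(A+B)}\cdot D(F)^{B/(A+B)},\qquad A=\int_0^b uf(u)\,du,\quad B=\int_0^a ug(u)\,du,$$ where $D(E),D(F)$ are the univariate transfinite diameters of $E,F$. In particular, if $A=B$ then $\delta_C(K)=[D(E)D(F)]^{1/2}$.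
   Context: $\Sigma=\{(x,y):x,y\ge0,\ x+y\le1\}$. For $n\ge1$, $\mathrm{Poly}(nC)$ is the span of the monomials $z^J$, $J\in nC\cap\mathbb{N}^2$, with dimension $d_n$ and monomials $z^{\alpha(j)}$, $j=1,\dots,d_n$. Let $V_n(K)=\max_{\zeta_1,\dots,\zeta_{d_n}\in K}|\det[\zeta_j^{\alpha(i)}]_{i,j=1}^{d_n}|$ and $l_n=\sum_{j=1}^{d_n}|\alpha(j)|$. The $C$-transfinite diameter is $\delta_C(K)=\limsup_n V_n(K)^{1/l_n}$ (known to be a limit). *)

theory Defs
  imports "HOL-Analysis.Analysis"
begin

definition Sigma_simplex :: "(real \<times> real) set" where
  "Sigma_simplex = {(x, y). 0 \<le> x \<and> 0 \<le> y \<and> x + y \<le> 1}"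

definition dil :: "real \<Rightarrow> (real \<times> real) set \<Rightarrow> (real \<times> real) set" where
  "dil t S = (\<lambda>p. t *\<^sub>R p) ` S"

definition lattice_pts :: "(real \<times> real) set \<Rightarrow> nat \<Rightarrow> (nat \<times> nat) set" where
  "lattice_pts C n = {J. (real (fst J), real (snd J)) \<in> dil (real n) C}"

definition monom :: "nat \<times> nat \<Rightarrow> complex \<times> complex \<Rightarrow> complex" where
  "monom J z = fst z ^ fst J * snd z ^ snd J"

text \<open>Determinant of a square matrix indexed by a finite set I (Leibniz formula).
  Its absolute value does not depend on an enumeration of I.\<close>
definition gen_det :: "'i set \<Rightarrow> ('i \<Rightarrow> 'i \<Rightarrow> complex) \<Rightarrow> complex" where
  "gen_det I M = (\<Sum>p\<in>{p. p permutes I}. of_int (sign p) * (\<Prod>i\<in>I. M i (p i)))"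

definition vander_max :: "(real \<times> real) set \<Rightarrow> (complex \<times> complex) set \<Rightarrow> nat \<Rightarrow> real" where
  "vander_max C K n = Sup {cmod (gen_det (lattice_pts C n) (\<lambda>i j. monom i (\<zeta> j))) | \<zeta>.
       \<forall>j\<in>lattice_pts C n. \<zeta> j \<in> K}"

definition deg_sum :: "(real \<times> real) set \<Rightarrow> nat \<Rightarrow> nat" where
  "deg_sum C n = (\<Sum>J\<in>lattice_pts C n. fst J + snd J)"

definition C_transfinite_diameter :: "(real \<times> real) set \<Rightarrow> (complex \<times> complex) set \<Rightarrow> ereal" where
  "C_transfinite_diameter C K =
     limsup (\<lambda>n. ereal (vander_max C K n powr (1 / real (deg_sum C n))))"

definition fekete_max :: "complex set \<Rightarrow> nat \<Rightarrow> real" where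
  "fekete_max E n = Sup {(\<Prod>i<n. \<Prod>j\<in>{i<..<n}. cmod (z i - z j)) | z. \<forall>i<n. z i \<in> E}"

text \<open>Classical univariate transfinite diameter D(E)
  = lim (max prod_{i<j}|z_i-z_j|)^{2/(n(n-1))} (a limit; written as limsup).\<close>
definition transfinite_diameter :: "complex set \<Rightarrow> real" where
  "transfinite_diameter E =
     real_of_ereal (limsup (\<lambda>n. ereal (fekete_max E n powr (2 / (real n * (real n - 1))))))"

definition outer_face :: "(real \<times> real) set \<Rightarrow> (real \<times> real) set" where
  "outer_face C = closure (frontier C - {p. fst p = 0 \<or> snd p = 0})"

end

theory Submission
  imports Defs "Jordan_Normal_Form.Determinant" "HOL-Real_Asymp.Real_Asymp"
begin

lemma perm_id_by_weight:
  fixes w :: "'a \<Rightarrow> int"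
  assumes fin: "finite S" and p: "p permutes S"
    and hw: "\<And>i. i \<in> S \<Longrightarrow> p i = i \<or> w i < w (p i)"
  shows "p = id"
proof -
  have le: "\<forall>i\<in>S. w i \<le> w (p i)" using hw by force
  have eq: "sum w S = sum (w \<circ> p) S" using sum.permute[OF p] by simp
  have "\<forall>i\<in>S. p i = i"
  proof (rule ccontr)
    assume "\<not> (\<forall>i\<in>S. p i = i)"
    then obtain i where "i \<in> S" "p i \<noteq> i" by blast
    then have "\<exists>i\<in>S. w i < (w \<circ> p) i" using hw by force
    then have "sum w S < sum (w \<circ> p) S"
      using sum_strict_mono_ex1[OF fin] le by (simp add: o_def)
    with eq show False by simp
  qed
  then show ?thesis using p unfolding permutes_def by (metis eq_id_iff)
qed

lemma gen_det_triangular: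
  fixes M :: "'a \<Rightarrow> 'a \<Rightarrow> complex" and w :: "'a \<Rightarrow> int"
  assumes fin: "finite S"
    and tri: "\<And>I J. I \<in> S \<Longrightarrow> J \<in> S \<Longrightarrow> M I J \<noteq> 0 \<Longrightarrow> I \<noteq> J \<Longrightarrow> w I < w J"
  shows "gen_det S M = (\<Prod>I\<in>S. M I I)"
proof -
  let ?g = "\<lambda>p. of_int (sign p) * (\<Prod>i\<in>S. M i (p i))"
  have z: "?g p = 0" if "p \<in> {p. p permutes S} - {id}" for p
  proof (rule ccontr)
    assume nz: "?g p \<noteq> 0"
    have pp: "p permutes S" "p \<noteq> id" using that by auto
    have "\<forall>i\<in>S. M i (p i) \<noteq> 0" using nz fin by auto
    then have "\<And>i. i \<in> S \<Longrightarrow> p i = i \<or> w i < w (p i)"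
      using tri pp(1) by (metis permutes_in_image)
    then have "p = id" using perm_id_by_weight[OF fin pp(1)] by blast
    with pp show False by simp
  qed
  have "gen_det S M = sum ?g {p. p permutes S}" unfolding gen_det_def by simp
  also have "\<dots> = sum ?g {id}"
    by (rule sum.mono_neutral_right) (use fin z permutes_id in \<open>auto simp: finite_permutations\<close>)
  finally show ?thesis by simp
qed

lemma map_permutation_apply:
  assumes "i \<in> A" "inj_on e A" "q permutes A"
  shows "map_permutation A e q (e i) = e (q i)"
  using assms unfolding map_permutation_def restrict_id_def by auto

lemma gen_det_to_mat:
  fixes M :: "'a \<Rightarrow> 'a \<Rightarrow> complex"
  assumes fin: "finite S" and e: "bij_betw e {0..<card S} S"
  shows "gen_det S M = Determinant.det (mat (card S) (card S) (\<lambda>(i,j). M (e i) (e j)))"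
proof -
  define n where "n = card S"
  define A where "A = {0..<n}"
  have e': "bij_betw e A S" using e by (simp add: A_def n_def)
  have inje: "inj_on e A" using e' bij_betw_def by blast
  define e' where "e' = inv_into A e"
  have inje': "inj_on e' S" using e' unfolding e'_def
    by (meson bij_betw_imp_inj_on bij_betw_inv_into)
  have bije': "bij_betw e' S A" unfolding e'_def using e' bij_betw_inv_into by blast
  have finA: "finite A" by (simp add: A_def)
  have "Determinant.det (mat n n (\<lambda>(i,j). M (e i) (e j))) =
     (\<Sum>q | q permutes A. of_int (sign q) * (\<Prod>i\<in>A. M (e i) (e (q i))))"
    unfolding det_def'[OF mat_carrier] A_def
    by (intro sum.cong refl arg_cong2[where f="(*)"] prod.cong) (auto simp: permutes_in_image)
  also have "\<dots> = gen_det S M"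
    unfolding gen_det_def
  proof (rule sum.reindex_bij_witness[where j = "\<lambda>q. map_permutation A e q"
                                        and i = "\<lambda>p. map_permutation S e' p"])
    fix q assume q: "q \<in> {q. q permutes A}"
    then have qA: "q permutes A" by simp
    have "map_permutation S e' (map_permutation A e q) = map_permutation A (e' \<circ> e) q"
      by (rule map_permutation_compose[OF e' inje'])
    also have "\<dots> = map_permutation A id q"
      by (rule map_permutation_cong) (use inje qA e'_def in \<open>auto simp: inj_on_def\<close>)
    also have "\<dots> = q" using qA by simp
    finally show "map_permutation S e' (map_permutation A e q) = q" .
    show "map_permutation A e q \<in> {p. p permutes S}"
      using map_permutation_permutes[OF e' qA] by simp
    have sg: "sign (map_permutation A e q) = sign q"
      by (rule sign_map_permutation[OF inje qA finA])
    have "(\<Prod>I\<in>S. M I (map_permutation A e q I)) = (\<Prod>i\<in>A. M (e i) (map_permutation A e q (e i)))"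
      using prod.reindex_bij_betw[OF e', symmetric] by simp
    also have "\<dots> = (\<Prod>i\<in>A. M (e i) (e (q i)))"
      by (intro prod.cong refl) (simp add: map_permutation_apply[OF _ inje qA])
    finally show "of_int (sign (map_permutation A e q)) * (\<Prod>I\<in>S. M I (map_permutation A e q I)) =
        of_int (sign q) * (\<Prod>i\<in>A. M (e i) (e (q i)))" using sg by simp
  next
    fix p assume p: "p \<in> {p. p permutes S}"
    then have pS: "p permutes S" by simp
    have "map_permutation A e (map_permutation S e' p) = map_permutation S (e \<circ> e') p"
      by (rule map_permutation_compose[OF bije' inje])
    also have "\<dots> = map_permutation S id p"
      by (rule map_permutation_cong) (use inje' pS e' e'_def in \<open>auto simp: inj_on_def bij_betw_inv_into_right\<close>)
    also have "\<dots> = p" using pS by simp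
    finally show "map_permutation A e (map_permutation S e' p) = p" .
    show "map_permutation S e' p \<in> {q. q permutes A}"
      using map_permutation_permutes[OF bije' pS] by simp
  qed
  finally show ?thesis by (simp add: n_def)
qed

lemma gen_det_mult:
  fixes A B :: "'a \<Rightarrow> 'a \<Rightarrow> complex"
  assumes fin: "finite S"
  shows "gen_det S (\<lambda>I J. \<Sum>K\<in>S. A I K * B K J) = gen_det S A * gen_det S B"
proof -
  obtain e where e: "bij_betw e {0..<card S} S" using ex_bij_betw_nat_finite[OF fin] by blast
  define n where "n = card S"
  let ?A = "mat n n (\<lambda>(i,j). A (e i) (e j))"
  let ?B = "mat n n (\<lambda>(i,j). B (e i) (e j))"
  have "mat n n (\<lambda>(i,j). (\<Sum>K\<in>S. A (e i) K * B K (e j))) = ?A * ?B"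
  proof (rule eq_matI)
    fix i j assume ij: "i < dim_row (?A * ?B)" "j < dim_col (?A * ?B)"
    then have ij': "i < n" "j < n" by auto
    have "(?A * ?B) $$ (i, j) = (\<Sum>k\<in>{0..<n}. A (e i) (e k) * B (e k) (e j))"
      using ij' by (simp add: scalar_prod_def)
    also have "\<dots> = (\<Sum>K\<in>S. A (e i) K * B K (e j))"
      using sum.reindex_bij_betw[OF e] by (simp add: n_def)
    finally show "mat n n (\<lambda>(i,j). (\<Sum>K\<in>S. A (e i) K * B K (e j))) $$ (i, j) = (?A * ?B) $$ (i, j)"
      using ij' by simp
  qed auto
  then show ?thesis
    using gen_det_to_mat[OF fin e] det_mult[of ?A n ?B] by (simp add: n_def)
qed

lemma gen_det_unitriangular_rowop:
  fixes U M :: "'a \<Rightarrow> 'a \<Rightarrow> complex" and w :: "'a \<Rightarrow> int"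
  assumes fin: "finite S"
    and diag: "\<And>I. I \<in> S \<Longrightarrow> U I I = 1"
    and tri: "\<And>I K. I \<in> S \<Longrightarrow> K \<in> S \<Longrightarrow> U I K \<noteq> 0 \<Longrightarrow> I \<noteq> K \<Longrightarrow> w K < w I"
  shows "gen_det S (\<lambda>I J. \<Sum>K\<in>S. U I K * M K J) = gen_det S M"
proof -
  have "gen_det S U = (\<Prod>I\<in>S. U I I)"
    by (rule gen_det_triangular[where w = "\<lambda>I. - w I"]) (use fin tri in force)+
  also have "\<dots> = 1" using diag by simp
  finally show ?thesis using gen_det_mult[OF fin] by simp
qed

definition lowerset :: "(nat \<times> nat) set \<Rightarrow> bool" where
  "lowerset S \<longleftrightarrow> (\<forall>I\<in>S. \<forall>K. fst K \<le> fst I \<and> snd K \<le> snd I \<longrightarrow> K \<in> S)"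

definition monicdeg :: "(nat \<Rightarrow> complex poly) \<Rightarrow> bool" where
  "monicdeg P \<longleftrightarrow> (\<forall>j. degree (P j) = j \<and> coeff (P j) j = 1)"

lemma poly_prod_expand:
  fixes p q :: "complex poly"
  shows "poly p z1 * poly q z2 =
    (\<Sum>K\<in>{..degree p} \<times> {..degree q}. (coeff p (fst K) * coeff q (snd K)) * Defs.monom K (z1, z2))"
proof -
  have "poly p z1 * poly q z2 = (\<Sum>i\<le>degree p. coeff p i * z1 ^ i) * (\<Sum>j\<le>degree q. coeff q j * z2 ^ j)"
    by (simp add: poly_altdef)
  also have "\<dots> = (\<Sum>i\<le>degree p. \<Sum>j\<le>degree q. (coeff p i * z1 ^ i) * (coeff q j * z2 ^ j))"
    by (simp add: sum_product)
  also have "\<dots> = (\<Sum>K\<in>{..degree p} \<times> {..degree q}. (coeff p (fst K) * z1 ^ fst K) * (coeff q (snd K) * z2 ^ snd K))"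
    by (simp add: sum.cartesian_product split_def)
  also have "\<dots> = (\<Sum>K\<in>{..degree p} \<times> {..degree q}. (coeff p (fst K) * coeff q (snd K)) * Defs.monom K (z1, z2))"
    by (intro sum.cong refl) (simp add: Defs.monom_def mult_ac)
  finally show ?thesis .
qed

lemma rowop_poly:
  assumes fin: "finite S" and low: "lowerset S" and P: "monicdeg P" and Q: "monicdeg Q"
  shows "gen_det S (\<lambda>I J. poly (P (fst I)) (fst (\<zeta> J)) * poly (Q (snd I)) (snd (\<zeta> J)))
       = gen_det S (\<lambda>I J. Defs.monom I (\<zeta> J))"
proof -
  define U where "U = (\<lambda>I K. coeff (P (fst I)) (fst K) * coeff (Q (snd I)) (snd K))"
  have eq: "poly (P (fst I)) (fst (\<zeta> J)) * poly (Q (snd I)) (snd (\<zeta> J)) = (\<Sum>K\<in>S. U I K * Defs.monom K (\<zeta> J))"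
    if I: "I \<in> S" for I J
  proof -
    have dP: "degree (P (fst I)) = fst I" and dQ: "degree (Q (snd I)) = snd I"
      using P Q by (auto simp: monicdeg_def)
    have sub: "{..fst I} \<times> {..snd I} \<subseteq> S" using low I by (auto simp: lowerset_def)
    have "poly (P (fst I)) (fst (\<zeta> J)) * poly (Q (snd I)) (snd (\<zeta> J)) =
        (\<Sum>K\<in>{..fst I} \<times> {..snd I}. U I K * Defs.monom K (fst (\<zeta> J), snd (\<zeta> J)))"
      using poly_prod_expand[of "P (fst I)" "fst (\<zeta> J)" "Q (snd I)" "snd (\<zeta> J)"] dP dQ
      by (simp add: U_def)
    also have "\<dots> = (\<Sum>K\<in>S. U I K * Defs.monom K (fst (\<zeta> J), snd (\<zeta> J)))"
    proof (rule sum.mono_neutral_left[OF fin sub])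
      show "\<forall>K\<in>S - {..fst I} \<times> {..snd I}. U I K * Defs.monom K (fst (\<zeta> J), snd (\<zeta> J)) = 0"
        using dP dQ by (force simp: U_def dest: le_degree)
    qed
    finally show ?thesis by simp
  qed
  have "gen_det S (\<lambda>I J. poly (P (fst I)) (fst (\<zeta> J)) * poly (Q (snd I)) (snd (\<zeta> J)))
      = gen_det S (\<lambda>I J. \<Sum>K\<in>S. U I K * Defs.monom K (\<zeta> J))"
    unfolding gen_det_def by (intro sum.cong refl arg_cong2[where f="(*)"] prod.cong) (auto simp: eq permutes_in_image)
  also have "\<dots> = gen_det S (\<lambda>I J. Defs.monom I (\<zeta> J))"
  proof (rule gen_det_unitriangular_rowop[OF fin, where w = "\<lambda>K. int (fst K + snd K)"])
    show "U I I = 1" if "I \<in> S" for I using P Q by (simp add: U_def monicdeg_def)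
    show "int (fst K + snd K) < int (fst I + snd I)" if "I \<in> S" "K \<in> S" "U I K \<noteq> 0" "I \<noteq> K" for I K
    proof -
      have "fst K \<le> fst I" "snd K \<le> snd I"
        using that(3) P Q by (auto simp: U_def monicdeg_def dest!: le_degree)
      then show ?thesis using that(4) by (cases I, cases K) auto
    qed
  qed
  finally show ?thesis .
qed

lemma monicdeg_newton: "monicdeg (\<lambda>j. \<Prod>k<j. [:- x k, 1:])"
  unfolding monicdeg_def
proof
  fix j
  have nz: "\<forall>k\<in>{..<j}. [:- x k, 1:] \<noteq> 0" by simp
  have "degree (\<Prod>k<j. [:- x k, 1:]) = j"
    by (subst degree_prod_eq_sum_degree) auto
  moreover have "lead_coeff (\<Prod>k<j. [:- (x k :: complex), 1:]) = 1"
    by (simp add: lead_coeff_prod)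
  ultimately show "degree (\<Prod>k<j. [:- x k, 1:]) = j \<and> coeff (\<Prod>k<j. [:- x k, 1:]) j = 1" by simp
qed

lemma newton_det:
  fixes x y :: "nat \<Rightarrow> complex"
  assumes fin: "finite S" and low: "lowerset S"
  shows "gen_det S (\<lambda>I J. Defs.monom I (x (fst J), y (snd J))) =
     (\<Prod>I\<in>S. (\<Prod>k<fst I. x (fst I) - x k) * (\<Prod>l<snd I. y (snd I) - y l))"
proof -
  let ?P = "\<lambda>j. \<Prod>k<j. [:- x k, 1:]" and ?Q = "\<lambda>j. \<Prod>k<j. [:- y k, 1:]"
  have "gen_det S (\<lambda>I J. Defs.monom I (x (fst J), y (snd J))) =
      gen_det S (\<lambda>I J. poly (?P (fst I)) (fst (x (fst J), y (snd J))) * poly (?Q (snd I)) (snd (x (fst J), y (snd J))))"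
    by (rule rowop_poly[OF fin low monicdeg_newton monicdeg_newton, symmetric])
  also have "\<dots> = gen_det S (\<lambda>I J. (\<Prod>k<fst I. x (fst J) - x k) * (\<Prod>l<snd I. y (snd J) - y l))"
    by (simp add: poly_prod)
  also have "\<dots> = (\<Prod>I\<in>S. (\<Prod>k<fst I. x (fst I) - x k) * (\<Prod>l<snd I. y (snd I) - y l))"
  proof (rule gen_det_triangular[OF fin, where w = "\<lambda>K. int (fst K + snd K)"])
    fix I J assume IJ: "I \<in> S" "J \<in> S" "(\<Prod>k<fst I. x (fst J) - x k) * (\<Prod>l<snd I. y (snd J) - y l) \<noteq> 0" "I \<noteq> J"
    have "fst I \<le> fst J"
    proof (rule ccontr)
      assume "\<not> fst I \<le> fst J"
      then have "fst J \<in> {..<fst I}" by simp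
      then have "(\<Prod>k<fst I. x (fst J) - x k) = 0" by (intro prod_zero) auto
      with IJ(3) show False by simp
    qed
    moreover have "snd I \<le> snd J"
    proof (rule ccontr)
      assume "\<not> snd I \<le> snd J"
      then have "snd J \<in> {..<snd I}" by simp
      then have "(\<Prod>l<snd I. y (snd J) - y l) = 0" by (intro prod_zero) auto
      with IJ(3) show False by simp
    qed
    ultimately show "int (fst I + snd I) < int (fst J + snd J)" using IJ(4) by (cases I, cases J) auto
  qed
  finally show ?thesis .
qed

lemma upper_det:
  assumes fin: "finite S" and low: "lowerset S" and P: "monicdeg P" and Q: "monicdeg Q"
    and bP: "\<And>I J. I \<in> S \<Longrightarrow> J \<in> S \<Longrightarrow> cmod (poly (P (fst I)) (fst (\<zeta> J))) \<le> bP (fst I)"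
    and bQ: "\<And>I J. I \<in> S \<Longrightarrow> J \<in> S \<Longrightarrow> cmod (poly (Q (snd I)) (snd (\<zeta> J))) \<le> bQ (snd I)"
  shows "cmod (gen_det S (\<lambda>I J. Defs.monom I (\<zeta> J))) \<le> fact (card S) * (\<Prod>I\<in>S. bP (fst I) * bQ (snd I))"
proof -
  let ?M = "\<lambda>I J. poly (P (fst I)) (fst (\<zeta> J)) * poly (Q (snd I)) (snd (\<zeta> J))"
  have "cmod (gen_det S (\<lambda>I J. Defs.monom I (\<zeta> J))) = cmod (gen_det S ?M)"
    using rowop_poly[OF fin low P Q] by simp
  also have "\<dots> \<le> (\<Sum>p | p permutes S. cmod (of_int (sign p) * (\<Prod>I\<in>S. ?M I (p I))))"
    unfolding gen_det_def by (rule norm_sum)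
  also have "\<dots> \<le> (\<Sum>p | p permutes S. (\<Prod>I\<in>S. bP (fst I) * bQ (snd I)))"
  proof (rule sum_mono)
    fix p assume "p \<in> {p. p permutes S}"
    then have p: "p permutes S" by simp
    have "cmod (of_int (sign p) * (\<Prod>I\<in>S. ?M I (p I))) = (\<Prod>I\<in>S. cmod (?M I (p I)))"
      by (simp add: norm_mult prod_norm[symmetric] sign_def)
    also have "\<dots> \<le> (\<Prod>I\<in>S. bP (fst I) * bQ (snd I))"
    proof (rule prod_mono)
      fix I assume I: "I \<in> S"
      have pI: "p I \<in> S" using p I by (simp add: permutes_in_image)
      show "0 \<le> cmod (?M I (p I)) \<and> cmod (?M I (p I)) \<le> bP (fst I) * bQ (snd I)"
        using bP[OF I pI] bQ[OF I pI] by (simp add: norm_mult mult_mono' order_trans[OF norm_ge_zero])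
    qed
    finally show "cmod (of_int (sign p) * (\<Prod>I\<in>S. ?M I (p I))) \<le> (\<Prod>I\<in>S. bP (fst I) * bQ (snd I))" .
  qed
  also have "\<dots> = fact (card S) * (\<Prod>I\<in>S. bP (fst I) * bQ (snd I))"
    using card_permutations[OF refl fin] by simp
  finally show ?thesis .
qed

definition supE :: "complex set \<Rightarrow> complex poly \<Rightarrow> real" where
  "supE E p = Sup ((\<lambda>z. cmod (poly p z)) ` E)"

definition cheb :: "complex set \<Rightarrow> real" where
  "cheb E = Inf {supE E p powr (1 / real (degree p)) | p. lead_coeff p = 1 \<and> degree p \<ge> 1}"

lemma supE_ge:
  assumes "compact E" "z \<in> E"
  shows "cmod (poly p z) \<le> supE E p"
proof -
  have "compact ((\<lambda>z. cmod (poly p z)) ` E)"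
    by (rule compact_continuous_image[OF _ assms(1)]) (intro continuous_intros)
  then have "bdd_above ((\<lambda>z. cmod (poly p z)) ` E)" by (meson bounded_imp_bdd_above compact_imp_bounded)
  then show ?thesis unfolding supE_def using assms(2) by (intro cSup_upper) auto
qed

lemma supE_attained:
  assumes "compact E" "E \<noteq> {}"
  shows "\<exists>z\<in>E. supE E p = cmod (poly p z)"
proof -
  obtain z where z: "z \<in> E" "\<forall>w\<in>E. cmod (poly p w) \<le> cmod (poly p z)"
  proof -
    have "continuous_on E (\<lambda>z. cmod (poly p z))" by (intro continuous_intros)
    from continuous_attains_sup[OF assms this] show ?thesis using that by blast
  qed
  have "supE E p = cmod (poly p z)" unfolding supE_def
    by (rule antisym, rule cSup_least) (use z in auto, intro cSup_upper, use z in auto)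
  with z show ?thesis by blast
qed

lemma supE_nonneg: "compact E \<Longrightarrow> E \<noteq> {} \<Longrightarrow> 0 \<le> supE E p"
  by (metis supE_attained norm_ge_zero)

lemma powr_root_pow:
  fixes x :: real
  assumes "0 \<le> x" "d \<ge> 1"
  shows "(x powr (1 / real d)) ^ d = x"
proof (cases "x = 0")
  case True then show ?thesis using assms by simp
next
  case False
  then have "(x powr (1 / real d)) ^ d = (x powr (1 / real d)) powr (real d)"
    using assms by (simp add: powr_realpow)
  also have "\<dots> = x" using assms False by (simp add: powr_powr)
  finally show ?thesis .
qed

lemma cheb_set_ne: "{supE E p powr (1 / real (degree p)) | p. lead_coeff p = 1 \<and> degree p \<ge> 1} \<noteq> {}"
proof -
  have "lead_coeff [:0, 1::complex:] = 1 \<and> degree [:0, 1::complex:] \<ge> 1" by simp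
  then show ?thesis by blast
qed

lemma cheb_set_bdd: "bdd_below {supE E p powr (1 / real (degree p)) | p. lead_coeff p = 1 \<and> degree p \<ge> 1}"
  by (rule bdd_belowI[of _ 0]) auto

lemma cheb_nonneg: "0 \<le> cheb E"
  unfolding cheb_def by (rule cInf_greatest[OF cheb_set_ne]) auto

lemma cheb_pow_le:
  assumes E: "compact E" "E \<noteq> {}" and p: "lead_coeff p = 1"
  shows "cheb E ^ degree p \<le> supE E p"
proof (cases "degree p = 0")
  case True
  then obtain c where "p = [:c:]" by (rule degree_eq_zeroE)
  then have "p = [:1:]" using p by simp
  then have "supE E p = 1" unfolding supE_def using E by simp
  then show ?thesis using True by simp
next
  case False
  let ?d = "degree p"
  have "cheb E \<le> supE E p powr (1 / real ?d)"
    unfolding cheb_def by (rule cInf_lower[OF _ cheb_set_bdd]) (use p False in auto)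
  then have "cheb E ^ ?d \<le> (supE E p powr (1 / real ?d)) ^ ?d"
    by (intro power_mono cheb_nonneg)
  also have "\<dots> = supE E p"
    using supE_nonneg[OF E, of p] False by (intro powr_root_pow) auto
  finally show ?thesis .
qed

lemma cheb_upper_family:
  assumes E: "compact E" "E \<noteq> {}" and eps: "0 < eps"
  shows "\<exists>P M. monicdeg P \<and> 1 \<le> M \<and> (\<forall>j. \<forall>z\<in>E. cmod (poly (P j) z) \<le> M * (cheb E + eps) ^ j)"
proof -
  define c where "c = cheb E + eps"
  have c0: "0 < c" using cheb_nonneg[of E] eps by (simp add: c_def)
  have "cheb E < c" using eps by (simp add: c_def)
  then obtain s where s: "s \<in> {supE E p powr (1 / real (degree p)) | p. lead_coeff p = 1 \<and> degree p \<ge> 1}" "s < c"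
    unfolding cheb_def using cInf_lessD[OF cheb_set_ne] by blast
  then obtain p where p: "lead_coeff p = 1" "degree p \<ge> 1" "supE E p powr (1 / real (degree p)) < c"
    by blast
  define k where "k = degree p"
  have k1: "k \<ge> 1" using p by (simp add: k_def)
  have sp0: "0 \<le> supE E p" by (rule supE_nonneg[OF E])
  have spk: "supE E p \<le> c ^ k"
  proof -
    have "supE E p = (supE E p powr (1 / real k)) ^ k"
      using sp0 k1 by (simp add: powr_root_pow)
    also have "\<dots> \<le> c ^ k" using p(3) by (intro power_mono) (auto simp: k_def)
    finally show ?thesis .
  qed
  obtain R where R: "R \<ge> 1" "\<forall>z\<in>E. cmod z \<le> R"
  proof -
    obtain R0 where "\<forall>z\<in>E. cmod z \<le> R0" using compact_imp_bounded[OF E(1)] bounded_iff by blast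
    then show ?thesis using that[of "max 1 R0"] by force
  qed
  define m where "m = max 1 (R / c)"
  define M where "M = m ^ k"
  have m1: "m \<ge> 1" by (simp add: m_def)
  define P where "P = (\<lambda>j. p ^ (j div k) * [:0, 1:] ^ (j mod k))"
  have monP: "monicdeg P" unfolding monicdeg_def
  proof
    fix j
    have "p \<noteq> 0" using p by auto
    then have "degree (P j) = k * (j div k) + j mod k"
      by (simp add: P_def degree_mult_eq degree_power_eq k_def)
    also have "\<dots> = j" by simp
    finally have "degree (P j) = j" .
    moreover have "lead_coeff (P j) = 1" using p by (simp add: P_def lead_coeff_mult lead_coeff_power)
    ultimately show "degree (P j) = j \<and> coeff (P j) j = 1" by simp
  qed
  have bound: "cmod (poly (P j) z) \<le> M * c ^ j" if z: "z \<in> E" for j z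
  proof -
    define q r where "q = j div k" and "r = j mod k"
    have jqr: "j = k * q + r" by (simp add: q_def r_def)
    have rk: "r < k" using k1 by (simp add: r_def)
    have "cmod (poly (P j) z) = cmod (poly p z) ^ q * cmod z ^ r"
      by (simp add: P_def q_def r_def norm_mult norm_power)
    also have "\<dots> \<le> (c ^ k) ^ q * R ^ r"
      using supE_ge[OF E(1) z, of p] spk R z c0
      by (intro mult_mono power_mono) auto
    also have "\<dots> = c ^ j * (R / c) ^ r"
      using c0 by (simp add: jqr power_add power_mult power_divide)
    also have "\<dots> \<le> c ^ j * m ^ r"
      by (intro mult_left_mono power_mono) (use c0 R in \<open>auto simp: m_def\<close>)
    also have "\<dots> \<le> c ^ j * M"
      unfolding M_def by (intro mult_left_mono power_increasing) (use rk m1 c0 in auto)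
    finally show ?thesis by (simp add: mult.commute)
  qed
  have "1 \<le> M" using m1 by (simp add: M_def)
  then show ?thesis using monP bound unfolding c_def by blast
qed

definition leja_pick :: "complex set \<Rightarrow> complex list \<Rightarrow> complex" where
  "leja_pick E xs = (SOME z. z \<in> E \<and> (\<forall>w\<in>E. (\<Prod>k<length xs. cmod (w - xs ! k)) \<le> (\<Prod>k<length xs. cmod (z - xs ! k))))"

fun leja_list :: "complex set \<Rightarrow> nat \<Rightarrow> complex list" where
  "leja_list E 0 = []"
| "leja_list E (Suc n) = leja_list E n @ [leja_pick E (leja_list E n)]"

lemma leja_list_length [simp]: "length (leja_list E n) = n"
  by (induction n) auto

lemma leja_list_prefix: "k < n \<Longrightarrow> n \<le> m \<Longrightarrow> leja_list E m ! k = leja_list E n ! k"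
proof (induction m)
  case 0 then show ?case by simp
next
  case (Suc m)
  show ?case
  proof (cases "n = Suc m")
    case True then show ?thesis by simp
  next
    case False
    then have "n \<le> m" using Suc by simp
    then show ?thesis using Suc by (simp add: nth_append)
  qed
qed

lemma leja_pick_prop:
  assumes E: "compact E" "E \<noteq> {}"
  shows "leja_pick E xs \<in> E \<and> (\<forall>w\<in>E. (\<Prod>k<length xs. cmod (w - xs ! k)) \<le> (\<Prod>k<length xs. cmod (leja_pick E xs - xs ! k)))"
proof -
  have "\<exists>z\<in>E. \<forall>w\<in>E. (\<Prod>k<length xs. cmod (w - xs ! k)) \<le> (\<Prod>k<length xs. cmod (z - xs ! k))"
    by (rule continuous_attains_sup[OF E]) (intro continuous_intros)
  then show ?thesis unfolding leja_pick_def by (rule someI2_bex) blast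
qed

lemma leja_exists:
  assumes E: "compact E" "E \<noteq> {}"
  shows "\<exists>x. \<forall>j. x j \<in> E \<and> cheb E ^ j \<le> (\<Prod>k<j. cmod (x j - x k))"
proof -
  define x where "x = (\<lambda>j. leja_list E (Suc j) ! j)"
  have xL: "leja_list E j ! k = x k" if "k < j" for j k
    using leja_list_prefix[of k "Suc k" j E] that by (simp add: x_def)
  have xj: "x j = leja_pick E (leja_list E j)" for j by (simp add: x_def nth_append)
  have "x j \<in> E \<and> cheb E ^ j \<le> (\<Prod>k<j. cmod (x j - x k))" for j
  proof -
    have pp: "x j \<in> E \<and> (\<forall>w\<in>E. (\<Prod>k<j. cmod (w - x k)) \<le> (\<Prod>k<j. cmod (x j - x k)))"
      using leja_pick_prop[OF E, of "leja_list E j"] by (simp add: xj[symmetric] xL)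
    define q where "q = (\<Prod>k<j. [:- x k, 1:])"
    have mq: "lead_coeff q = 1" "degree q = j"
      using monicdeg_newton[of x] by (auto simp: monicdeg_def q_def)
    obtain w where w: "w \<in> E" "supE E q = cmod (poly q w)" using supE_attained[OF E] by blast
    have "cheb E ^ j \<le> supE E q" using cheb_pow_le[OF E mq(1)] mq(2) by simp
    also have "\<dots> = (\<Prod>k<j. cmod (w - x k))" using w by (simp add: q_def poly_prod prod_norm)
    also have "\<dots> \<le> (\<Prod>k<j. cmod (x j - x k))" using pp w by blast
    finally show ?thesis using pp by blast
  qed
  then show ?thesis by blast
qed

lemma tri_swap:
  fixes g :: "nat \<Rightarrow> nat \<Rightarrow> 'a::comm_monoid_mult"
  shows "(\<Prod>i<m. \<Prod>j\<in>{i<..<m}. g i j) = (\<Prod>j<m. \<Prod>i<j. g i j)"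
proof (induction m)
  case 0 then show ?case by simp
next
  case (Suc m)
  have e: "{m<..<Suc m} = {}" by auto
  have "(\<Prod>i<Suc m. \<Prod>j\<in>{i<..<Suc m}. g i j) = (\<Prod>i<m. \<Prod>j\<in>{i<..<Suc m}. g i j)"
    by (simp add: lessThan_Suc e)
  also have "\<dots> = (\<Prod>i<m. g i m * (\<Prod>j\<in>{i<..<m}. g i j))"
  proof (intro prod.cong refl)
    fix i assume "i \<in> {..<m}"
    then have "{i<..<Suc m} = insert m {i<..<m}" by auto
    then show "(\<Prod>j\<in>{i<..<Suc m}. g i j) = g i m * (\<Prod>j\<in>{i<..<m}. g i j)" by simp
  qed
  also have "\<dots> = (\<Prod>i<m. g i m) * (\<Prod>i<m. \<Prod>j\<in>{i<..<m}. g i j)" by (simp add: prod.distrib)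
  also have "\<dots> = (\<Prod>j<Suc m. \<Prod>i<j. g i j)" using Suc by (simp add: mult.commute)
  finally show ?case .
qed

lemma sum_lessThan_id: "2 * (\<Sum>i<m. i) = m * (m - 1::nat)"
proof (induction m)
  case 0 then show ?case by simp
next
  case (Suc m) then show ?case by (cases m) (auto simp: algebra_simps)
qed

lemma fact_le_pow: "(fact m :: real) \<le> real m ^ m"
proof (induction m)
  case 0 then show ?case by simp
next
  case (Suc m)
  have "(fact (Suc m) :: real) = real (Suc m) * fact m" by simp
  also have "\<dots> \<le> real (Suc m) * real m ^ m" using Suc by (intro mult_left_mono) auto
  also have "\<dots> \<le> real (Suc m) * real (Suc m) ^ m" by (intro mult_left_mono power_mono) auto
  finally show ?case by simp
qed

lemma pow_powr_inv:
  fixes x :: real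
  assumes "0 \<le> x" "N \<ge> 1"
  shows "(x ^ N) powr (1 / real N) = x"
proof (cases "x = 0")
  case True then show ?thesis using assms by simp
next
  case False
  then have "(x ^ N) powr (1 / real N) = (x powr real N) powr (1 / real N)"
    using assms by (simp add: powr_realpow)
  also have "\<dots> = x" using assms False by (simp add: powr_powr)
  finally show ?thesis .
qed

definition S1 :: "nat \<Rightarrow> (nat \<times> nat) set" where "S1 m = {..<m} \<times> {0}"

lemma S1_fin: "finite (S1 m)" and S1_low: "lowerset (S1 m)"
  by (auto simp: S1_def lowerset_def)

lemma S1_card: "card (S1 m) = m" by (simp add: S1_def card_cartesian_product)

lemma prod_S1: "(\<Prod>I\<in>S1 m. h I) = (\<Prod>i<m. h (i, 0))"
proof -
  have "S1 m = (\<lambda>i. (i, 0)) ` {..<m}" by (auto simp: S1_def)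
  then show ?thesis by (simp add: prod.reindex inj_on_def)
qed

lemma fek_det:
  "(\<Prod>i<m. \<Prod>j\<in>{i<..<m}. cmod (z i - z j)) =
     cmod (gen_det (S1 m) (\<lambda>I J. Defs.monom I (z (fst J), 0)))"
proof -
  have "gen_det (S1 m) (\<lambda>I J. Defs.monom I (z (fst J), (\<lambda>_. 0) (snd J))) =
     (\<Prod>I\<in>S1 m. (\<Prod>k<fst I. z (fst I) - z k) * (\<Prod>l<snd I. (\<lambda>_. 0::complex) (snd I) - 0))"
    using newton_det[OF S1_fin S1_low, where x = z and y = "\<lambda>_. 0"] by simp
  also have "\<dots> = (\<Prod>i<m. \<Prod>k<i. z i - z k)" by (simp add: prod_S1)
  finally have "cmod (gen_det (S1 m) (\<lambda>I J. Defs.monom I (z (fst J), 0))) = (\<Prod>i<m. \<Prod>k<i. cmod (z i - z k))"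
    by (simp add: prod_norm[symmetric])
  also have "\<dots> = (\<Prod>j<m. \<Prod>i<j. cmod (z i - z j))"
    by (intro prod.cong refl) (simp add: norm_minus_commute)
  also have "\<dots> = (\<Prod>i<m. \<Prod>j\<in>{i<..<m}. cmod (z i - z j))" by (rule tri_swap[symmetric])
  finally show ?thesis by simp
qed

lemma fek_upper:
  assumes P: "monicdeg P" and bnd: "\<And>j w. w \<in> E \<Longrightarrow> cmod (poly (P j) w) \<le> M * c ^ j"
    and z: "\<forall>i<m. z i \<in> E"
  shows "(\<Prod>i<m. \<Prod>j\<in>{i<..<m}. cmod (z i - z j)) \<le> fact m * (M ^ m * c ^ (\<Sum>i<m. i))"
proof -
  let ?Q = "\<lambda>j. \<Prod>k<j. [:- (\<lambda>_. 0::complex) k, 1:]"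
  have "(\<Prod>i<m. \<Prod>j\<in>{i<..<m}. cmod (z i - z j)) = cmod (gen_det (S1 m) (\<lambda>I J. Defs.monom I ((\<lambda>J. (z (fst J), 0)) J)))"
    by (simp add: fek_det)
  also have "\<dots> \<le> fact (card (S1 m)) * (\<Prod>I\<in>S1 m. (\<lambda>j. M * c ^ j) (fst I) * (\<lambda>_. 1) (snd I))"
  proof (rule upper_det[OF S1_fin S1_low P monicdeg_newton])
    fix I J assume "I \<in> S1 m" "J \<in> S1 m"
    then show "cmod (poly (P (fst I)) (fst (z (fst J), 0))) \<le> M * c ^ fst I"
      using bnd z by (auto simp: S1_def)
    show "cmod (poly (?Q (snd I)) (snd (z (fst J), 0::complex))) \<le> 1"
      using \<open>I \<in> S1 m\<close> by (auto simp: S1_def)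
  qed
  also have "\<dots> = fact m * (\<Prod>i<m. M * c ^ i)" by (simp add: S1_card prod_S1)
  also have "\<dots> = fact m * (M ^ m * c ^ (\<Sum>i<m. i))" by (simp add: prod.distrib power_sum)
  finally show ?thesis .
qed

lemma fekete_bounds:
  assumes E: "compact E" "E \<noteq> {}" and P: "monicdeg P"
    and bnd: "\<And>j w. w \<in> E \<Longrightarrow> cmod (poly (P j) w) \<le> M * c ^ j"
  shows "fekete_max E m \<le> fact m * (M ^ m * c ^ (\<Sum>i<m. i))"
    and "cheb E ^ (\<Sum>i<m. i) \<le> fekete_max E m"
proof -
  let ?X = "{(\<Prod>i<m. \<Prod>j\<in>{i<..<m}. cmod (z i - z j)) | z. \<forall>i<m. z i \<in> E}"
  obtain e where e: "e \<in> E" using E by blast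
  have ne: "?X \<noteq> {}" using e by (auto intro!: exI[of _ "\<lambda>_. e"])
  have ub: "\<forall>t\<in>?X. t \<le> fact m * (M ^ m * c ^ (\<Sum>i<m. i))" using fek_upper[OF P bnd] by blast
  show "fekete_max E m \<le> fact m * (M ^ m * c ^ (\<Sum>i<m. i))"
    unfolding fekete_max_def using ne ub by (intro cSup_least) auto
  obtain x where x: "\<forall>j. x j \<in> E \<and> cheb E ^ j \<le> (\<Prod>k<j. cmod (x j - x k))"
    using leja_exists[OF E] by blast
  have "cheb E ^ (\<Sum>i<m. i) = (\<Prod>j<m. cheb E ^ j)" by (simp add: power_sum)
  also have "\<dots> \<le> (\<Prod>j<m. \<Prod>k<j. cmod (x j - x k))"
    using x cheb_nonneg by (intro prod_mono) auto
  also have "\<dots> = (\<Prod>j<m. \<Prod>k<j. cmod (x k - x j))"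
    by (intro prod.cong refl) (simp add: norm_minus_commute)
  also have "\<dots> = (\<Prod>i<m. \<Prod>j\<in>{i<..<m}. cmod (x i - x j))" by (rule tri_swap[symmetric])
  also have "\<dots> \<le> fekete_max E m"
  proof -
    have mem: "(\<Prod>i<m. \<Prod>j\<in>{i<..<m}. cmod (x i - x j)) \<in> ?X" using x by blast
    have bdd: "bdd_above ?X" using ub by (intro bdd_aboveI) blast
    show ?thesis unfolding fekete_max_def by (rule cSup_upper[OF mem bdd])
  qed
  finally show "cheb E ^ (\<Sum>i<m. i) \<le> fekete_max E m" .
qed

lemma limsup_squeeze:
  fixes a lo :: "nat \<Rightarrow> real"
  assumes lo: "\<forall>\<^sub>F n in sequentially. lo n \<le> a n" "lo \<longlonglongrightarrow> L"
    and up: "\<And>\<eta>. 0 < \<eta> \<Longrightarrow> \<exists>u U. u \<longlonglongrightarrow> U \<and> U \<le> L + \<eta> \<and> (\<forall>\<^sub>F n in sequentially. a n \<le> u n)"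
  shows "limsup (\<lambda>n. ereal (a n)) = ereal L"
proof (rule antisym)
  show "limsup (\<lambda>n. ereal (a n)) \<le> ereal L"
  proof (rule ereal_le_epsilon2)
    fix \<eta> :: real assume "0 < \<eta>"
    then obtain u U where u: "u \<longlonglongrightarrow> U" "U \<le> L + \<eta>" "\<forall>\<^sub>F n in sequentially. a n \<le> u n"
      using up by blast
    have "limsup (\<lambda>n. ereal (a n)) \<le> limsup (\<lambda>n. ereal (u n))"
      by (rule Limsup_mono) (use u(3) in \<open>auto elim: eventually_mono\<close>)
    also have "\<dots> = ereal U"
      by (rule lim_imp_Limsup) (use u(1) in \<open>auto intro: tendsto_intros\<close>)
    finally have "limsup (\<lambda>n. ereal (a n)) \<le> ereal U" .
    moreover have "ereal U \<le> ereal L + ereal \<eta>" using u(2) by simp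
    ultimately show "limsup (\<lambda>n. ereal (a n)) \<le> ereal L + ereal \<eta>" by (rule order_trans)
  qed
  have "ereal L = limsup (\<lambda>n. ereal (lo n))"
    by (rule lim_imp_Limsup[symmetric]) (use lo(2) in \<open>auto intro: tendsto_intros\<close>)
  also have "\<dots> \<le> limsup (\<lambda>n. ereal (a n))"
    by (rule Limsup_mono) (use lo(1) in \<open>auto elim: eventually_mono\<close>)
  finally show "ereal L \<le> limsup (\<lambda>n. ereal (a n))" .
qed

lemma td_eq_cheb:
  assumes E: "compact E" "E \<noteq> {}"
  shows "transfinite_diameter E = cheb E"
proof -
  let ?T = "cheb E"
  let ?a = "\<lambda>n. fekete_max E n powr (2 / (real n * (real n - 1)))"
  have Nrel: "2 / (real m * (real m - 1)) = 1 / real (\<Sum>i<m. i)" if "m \<ge> 2" for m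
  proof -
    define N where "N = (\<Sum>i<m. i)"
    have "2 * N = m * (m - 1)" using sum_lessThan_id[of m] by (simp add: N_def)
    then have "real (2 * N) = real (m * (m - 1))" by simp
    then have h: "2 * real N = real m * (real m - 1)" using that by (simp add: of_nat_diff)
    have "real m \<ge> 2" using that by simp
    then have "real m * (real m - 1) > 0" by (intro mult_pos_pos) auto
    then have "real N > 0" using h by linarith
    then show ?thesis using h that by (simp add: N_def[symmetric] field_simps)
  qed
  have N1: "(\<Sum>i<m. i) \<ge> 1" if "m \<ge> 2" for m :: nat
  proof -
    have "(\<Sum>i<m. i) \<ge> (\<Sum>i\<in>{1::nat}. i)" by (rule sum_mono2) (use that in auto)
    then show ?thesis by simp
  qed
  have "limsup (\<lambda>n. ereal (?a n)) = ereal ?T"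
  proof (rule limsup_squeeze[where lo = "\<lambda>_. ?T"])
    show "\<forall>\<^sub>F n in sequentially. ?T \<le> ?a n"
      using eventually_ge_at_top[of 2]
    proof (rule eventually_mono)
      fix m :: nat assume m: "m \<ge> 2"
      obtain P M where PM: "monicdeg P" "1 \<le> M" "\<forall>j. \<forall>z\<in>E. cmod (poly (P j) z) \<le> M * (cheb E + 1) ^ j"
        using cheb_upper_family[OF E, of 1] by auto
      have "?T = (?T ^ (\<Sum>i<m. i)) powr (1 / real (\<Sum>i<m. i))"
        using pow_powr_inv[OF cheb_nonneg N1[OF m]] by simp
      also have "\<dots> \<le> ?a m"
        unfolding Nrel[OF m]
        by (intro powr_mono2 fekete_bounds(2)[OF E PM(1)]) (use PM cheb_nonneg in \<open>auto simp: sum_nonneg\<close>)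
      finally show "?T \<le> ?a m" .
    qed
    show "(\<lambda>_. ?T) \<longlonglongrightarrow> ?T" by simp
  next
    fix \<eta> :: real assume eta: "0 < \<eta>"
    obtain P M where PM: "monicdeg P" "1 \<le> M" "\<forall>j. \<forall>z\<in>E. cmod (poly (P j) z) \<le> M * (cheb E + \<eta>) ^ j"
      using cheb_upper_family[OF E eta] by auto
    define c where "c = ?T + \<eta>"
    have c0: "0 < c" using cheb_nonneg[of E] eta by (simp add: c_def)
    have lim: "(\<lambda>m. (real m * M) powr (2 / (real m - 1)) * c) \<longlonglongrightarrow> 1 * c"
    proof (rule tendsto_mult[OF _ tendsto_const])
      show "(\<lambda>m. (real m * M) powr (2 / (real m - 1))) \<longlonglongrightarrow> 1" using PM(2) by real_asymp
    qed
    have ev: "\<forall>\<^sub>F m in sequentially. ?a m \<le> (real m * M) powr (2 / (real m - 1)) * c"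
      using eventually_ge_at_top[of 2]
    proof (rule eventually_mono)
      fix m :: nat assume m: "m \<ge> 2"
      define N where "N = (\<Sum>i<m. i)"
      have N1': "N \<ge> 1" using N1[OF m] by (simp add: N_def)
      have fm: "fekete_max E m \<le> fact m * (M ^ m * c ^ N)"
        using fekete_bounds(1)[OF E PM(1), of M c m] PM(3) by (simp add: c_def N_def)
      have f0: "0 \<le> fekete_max E m"
        using fekete_bounds(2)[OF E PM(1), of M c m] PM(3) zero_le_power[OF cheb_nonneg[of E]]
        unfolding c_def by (meson order_trans)
      have "?a m = fekete_max E m powr (1 / real N)" using Nrel[OF m] by (simp add: N_def)
      also have "\<dots> \<le> (fact m * (M ^ m * c ^ N)) powr (1 / real N)"
        by (intro powr_mono2 fm f0) simp
      also have "\<dots> \<le> ((real m * M) ^ m * c ^ N) powr (1 / real N)"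
      proof (intro powr_mono2)
        have "fact m * M ^ m \<le> real m ^ m * M ^ m"
          by (intro mult_right_mono fact_le_pow) (use PM in auto)
        then show "fact m * (M ^ m * c ^ N) \<le> (real m * M) ^ m * c ^ N"
          using c0 by (simp add: power_mult_distrib mult.assoc[symmetric] mult_right_mono)
      qed (use PM c0 in auto)
      also have "\<dots> = ((real m * M) ^ m) powr (1 / real N) * (c ^ N) powr (1 / real N)"
        using PM c0 by (simp add: powr_mult)
      also have "(c ^ N) powr (1 / real N) = c" using pow_powr_inv[OF _ N1'] c0 by simp
      also have "((real m * M) ^ m) powr (1 / real N) = (real m * M) powr (real m / real N)"
        using PM m by (simp add: powr_realpow[symmetric] powr_powr)
      also have "real m / real N = 2 / (real m - 1)"
      proof -
        have "1 / real N = 2 / (real m * (real m - 1))" using Nrel[OF m] by (simp add: N_def)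
        then show ?thesis using m by (simp add: field_simps)
      qed
      finally show "?a m \<le> (real m * M) powr (2 / (real m - 1)) * c" .
    qed
    show "\<exists>u U. u \<longlonglongrightarrow> U \<and> U \<le> ?T + \<eta> \<and> (\<forall>\<^sub>F n in sequentially. ?a n \<le> u n)"
      using lim ev by (intro exI conjI) (auto simp: c_def)
  qed
  then show ?thesis unfolding transfinite_diameter_def by simp
qed

lemma vander_bounds:
  assumes E: "compact E" "E \<noteq> {}" and F: "compact F" "F \<noteq> {}"
    and fin: "finite S" and low: "lowerset S"
    and P: "monicdeg P" and bP: "\<And>j w. w \<in> E \<Longrightarrow> cmod (poly (P j) w) \<le> ME * cE ^ j"
    and Q: "monicdeg Q" and bQ: "\<And>j w. w \<in> F \<Longrightarrow> cmod (poly (Q j) w) \<le> MF * cF ^ j"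
  shows "Sup {cmod (gen_det S (\<lambda>i j. Defs.monom i (\<zeta> j))) | \<zeta>. \<forall>j\<in>S. \<zeta> j \<in> E \<times> F}
           \<le> fact (card S) * ((ME * MF) ^ card S * (cE ^ (\<Sum>I\<in>S. fst I) * cF ^ (\<Sum>I\<in>S. snd I)))"
    and "cheb E ^ (\<Sum>I\<in>S. fst I) * cheb F ^ (\<Sum>I\<in>S. snd I)
           \<le> Sup {cmod (gen_det S (\<lambda>i j. Defs.monom i (\<zeta> j))) | \<zeta>. \<forall>j\<in>S. \<zeta> j \<in> E \<times> F}"
proof -
  let ?X = "{cmod (gen_det S (\<lambda>i j. Defs.monom i (\<zeta> j))) | \<zeta>. \<forall>j\<in>S. \<zeta> j \<in> E \<times> F}"
  let ?B = "fact (card S) * ((ME * MF) ^ card S * (cE ^ (\<Sum>I\<in>S. fst I) * cF ^ (\<Sum>I\<in>S. snd I)))"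
  have ub: "t \<le> ?B" if "t \<in> ?X" for t
  proof -
    obtain \<zeta> where z: "t = cmod (gen_det S (\<lambda>i j. Defs.monom i (\<zeta> j)))" "\<forall>j\<in>S. \<zeta> j \<in> E \<times> F"
      using \<open>t \<in> ?X\<close> by blast
    have "t \<le> fact (card S) * (\<Prod>I\<in>S. (\<lambda>j. ME * cE ^ j) (fst I) * (\<lambda>j. MF * cF ^ j) (snd I))"
      unfolding z(1)
    proof (rule upper_det[OF fin low P Q])
      fix I J assume "I \<in> S" "J \<in> S"
      then show "cmod (poly (P (fst I)) (fst (\<zeta> J))) \<le> ME * cE ^ fst I"
        and "cmod (poly (Q (snd I)) (snd (\<zeta> J))) \<le> MF * cF ^ snd I"
        using z(2) bP bQ by (auto simp: mem_Times_iff)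
    qed
    also have "(\<Prod>I\<in>S. (\<lambda>j. ME * cE ^ j) (fst I) * (\<lambda>j. MF * cF ^ j) (snd I))
        = (ME * MF) ^ card S * (cE ^ (\<Sum>I\<in>S. fst I) * cF ^ (\<Sum>I\<in>S. snd I))"
      by (simp add: prod.distrib power_sum power_mult_distrib mult_ac)
    finally show ?thesis .
  qed
  obtain e1 e2 where e: "e1 \<in> E" "e2 \<in> F" using E F by blast
  have ne: "?X \<noteq> {}" using e by (auto intro!: exI[of _ "\<lambda>_. (e1, e2)"])
  show "Sup ?X \<le> ?B" using ne ub by (intro cSup_least) auto
  obtain x where x: "\<forall>j. x j \<in> E \<and> cheb E ^ j \<le> (\<Prod>k<j. cmod (x j - x k))"
    using leja_exists[OF E] by blast
  obtain y where y: "\<forall>j. y j \<in> F \<and> cheb F ^ j \<le> (\<Prod>k<j. cmod (y j - y k))"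
    using leja_exists[OF F] by blast
  have "cheb E ^ (\<Sum>I\<in>S. fst I) * cheb F ^ (\<Sum>I\<in>S. snd I) = (\<Prod>I\<in>S. cheb E ^ fst I * cheb F ^ snd I)"
    by (simp add: prod.distrib power_sum)
  also have "\<dots> \<le> (\<Prod>I\<in>S. (\<Prod>k<fst I. cmod (x (fst I) - x k)) * (\<Prod>l<snd I. cmod (y (snd I) - y l)))"
    using x y cheb_nonneg by (intro prod_mono conjI mult_mono) (auto simp: prod_nonneg)
  also have "\<dots> = cmod (gen_det S (\<lambda>i j. Defs.monom i ((\<lambda>J. (x (fst J), y (snd J))) j)))"
    by (simp add: newton_det[OF fin low] prod_norm[symmetric] norm_mult)
  also have "\<dots> \<le> Sup ?X"
  proof (rule cSup_upper)
    show "cmod (gen_det S (\<lambda>i j. Defs.monom i ((\<lambda>J. (x (fst J), y (snd J))) j))) \<in> ?X"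
      using x y by (intro CollectI exI[of _ "\<lambda>J. (x (fst J), y (snd J))"]) (auto simp: mem_Times_iff)
    show "bdd_above ?X" using ub by (intro bdd_aboveI) blast
  qed
  finally show "cheb E ^ (\<Sum>I\<in>S. fst I) * cheb F ^ (\<Sum>I\<in>S. snd I) \<le> Sup ?X" .
qed


lemma pow_powr_div:
  fixes x l :: real
  assumes "0 \<le> x" "0 < X" "0 < l"
  shows "(x ^ X) powr (1 / l) = x powr (real X / l)"
proof (cases "x = 0")
  case True then show ?thesis using assms by simp
next
  case False
  then have "(x ^ X) powr (1 / l) = (x powr real X) powr (1 / l)"
    using assms by (simp add: powr_realpow)
  also have "\<dots> = x powr (real X / l)" by (simp add: powr_powr)
  finally show ?thesis .
qed

lemma fact_pow_powr_lim:
  fixes N l :: "nat \<Rightarrow> nat"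
  assumes M: "M \<ge> 1" and K: "K > 0" and A: "A > 0"
    and ev: "\<forall>\<^sub>F n in sequentially. 1 \<le> N n \<and> real (N n) \<le> K * real n ^ 2 \<and> A / 2 * real n ^ 3 \<le> real (l n)"
  shows "(\<lambda>n. (fact (N n) * M ^ N n) powr (1 / real (l n))) \<longlonglongrightarrow> 1"
proof (rule tendsto_sandwich[where f = "\<lambda>_. 1" and h = "\<lambda>n. (K * real n ^ 2 * M) powr (2 * K / (A * real n))"])
  show "(\<lambda>n. (K * real n ^ 2 * M) powr (2 * K / (A * real n))) \<longlonglongrightarrow> 1" using K M A by real_asymp
  show "(\<lambda>_. 1::real) \<longlonglongrightarrow> 1" by simp
  have ev1: "\<forall>\<^sub>F n in sequentially. n \<ge> 1 \<and> 1 \<le> N n \<and> real (N n) \<le> K * real n ^ 2 \<and> A / 2 * real n ^ 3 \<le> real (l n)"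
    using ev eventually_ge_at_top[of 1] by eventually_elim auto
  show "\<forall>\<^sub>F n in sequentially. 1 \<le> (fact (N n) * M ^ N n) powr (1 / real (l n))"
    using ev1
  proof eventually_elim
    case (elim n)
    have "(1::real) * 1 \<le> fact (N n) * M ^ N n"
      by (rule mult_mono) (use M in \<open>auto simp: one_le_power\<close>)
    then show ?case by (intro ge_one_powr_ge_zero) auto
  qed
  show "\<forall>\<^sub>F n in sequentially. (fact (N n) * M ^ N n) powr (1 / real (l n)) \<le> (K * real n ^ 2 * M) powr (2 * K / (A * real n))"
    using ev1
  proof eventually_elim
    case (elim n)
    define x where "x = K * real n ^ 2 * M"
    have n1: "real n \<ge> 1" using elim by simp
    have l0: "real (l n) > 0"
    proof -
      have "A / 2 * real n ^ 3 > 0" using A n1 by simp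
      then show ?thesis using elim by linarith
    qed
    have NM1: "real (N n) * M \<ge> 1" using elim M by (metis mult_mono' of_nat_1 of_nat_le_iff mult_1_right le_numeral_extra(1) order_trans zero_le_one)
    have x1: "x \<ge> real (N n) * M" unfolding x_def using elim M by (simp add: mult_right_mono)
    have x1': "x \<ge> 1" using NM1 x1 by linarith
    have "fact (N n) * M ^ N n \<le> real (N n) ^ N n * M ^ N n"
      using M by (intro mult_right_mono fact_le_pow) auto
    also have "\<dots> = (real (N n) * M) ^ N n" by (simp add: power_mult_distrib)
    also have "\<dots> \<le> x ^ N n" using NM1 x1 by (intro power_mono) auto
    also have "\<dots> = x powr real (N n)" using x1' by (simp add: powr_realpow)
    also have "\<dots> \<le> x powr (K * real n ^ 2)" using x1' elim by (intro powr_mono) auto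
    finally have h: "fact (N n) * M ^ N n \<le> x powr (K * real n ^ 2)" .
    have "(fact (N n) * M ^ N n) powr (1 / real (l n)) \<le> (x powr (K * real n ^ 2)) powr (1 / real (l n))"
      using h M by (intro powr_mono2) auto
    also have "\<dots> = x powr (K * real n ^ 2 / real (l n))" by (simp add: powr_powr)
    also have "\<dots> \<le> x powr (2 * K / (A * real n))"
    proof (rule powr_mono[OF _ x1'])
      have "K * real n ^ 2 / real (l n) \<le> K * real n ^ 2 / (A / 2 * real n ^ 3)"
        using elim l0 K A n1 by (intro divide_left_mono) auto
      also have "\<dots> = 2 * K / (A * real n)" using n1 A by (simp add: field_simps power2_eq_square power3_eq_cube)
      finally show "K * real n ^ 2 / real (l n) \<le> 2 * K / (A * real n)" .
    qed
    finally show ?case by (simp add: x_def)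
  qed
qed

lemma assembly:
  fixes C :: "(real \<times> real) set" and E F :: "complex set" and A B K :: real
  assumes E: "compact E" "E \<noteq> {}" and F: "compact F" "F \<noteq> {}"
    and fin: "\<And>n. n \<ge> 1 \<Longrightarrow> finite (lattice_pts C n)"
    and low: "\<And>n. n \<ge> 1 \<Longrightarrow> lowerset (lattice_pts C n)"
    and XA: "(\<lambda>n. real (\<Sum>I\<in>lattice_pts C n. fst I) / real n ^ 3) \<longlonglongrightarrow> A"
    and YB: "(\<lambda>n. real (\<Sum>I\<in>lattice_pts C n. snd I) / real n ^ 3) \<longlonglongrightarrow> B"
    and A0: "A > 0" and B0: "B > 0" and K0: "K > 0"
    and card: "\<And>n. n \<ge> 1 \<Longrightarrow> real (card (lattice_pts C n)) \<le> K * real n ^ 2"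
  shows "C_transfinite_diameter C (E \<times> F) = ereal (cheb E powr (A / (A + B)) * cheb F powr (B / (A + B)))"
proof -
  define X where "X = (\<lambda>n. \<Sum>I\<in>lattice_pts C n. fst I)"
  define Y where "Y = (\<lambda>n. \<Sum>I\<in>lattice_pts C n. snd I)"
  define N where "N = (\<lambda>n. card (lattice_pts C n))"
  define l where "l = (\<lambda>n. deg_sum C n)"
  have lXY: "l n = X n + Y n" for n by (simp add: l_def X_def Y_def deg_sum_def sum.distrib)
  define TE TF where "TE = cheb E" and "TF = cheb F"
  have TE0: "TE \<ge> 0" and TF0: "TF \<ge> 0" by (simp_all add: TE_def TF_def cheb_nonneg)
  define \<alpha> \<beta> where "\<alpha> = A / (A + B)" and "\<beta> = B / (A + B)"
  have al0: "\<alpha> > 0" and be0: "\<beta> > 0" using A0 B0 by (simp_all add: \<alpha>_def \<beta>_def)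
  define L where "L = TE powr \<alpha> * TF powr \<beta>"
  have XA': "(\<lambda>n. real (X n) / real n ^ 3) \<longlonglongrightarrow> A" unfolding X_def by (rule XA)
  have YB': "(\<lambda>n. real (Y n) / real n ^ 3) \<longlonglongrightarrow> B" unfolding Y_def by (rule YB)
  have "A / 2 < A" using A0 by simp
  from order_tendstoD(1)[OF XA' this]
  have evX: "\<forall>\<^sub>F n in sequentially. A / 2 < real (X n) / real n ^ 3" .
  from order_tendstoD(1)[OF YB' B0]
  have evY: "\<forall>\<^sub>F n in sequentially. 0 < real (Y n) / real n ^ 3" .
  have ev: "\<forall>\<^sub>F n in sequentially. n \<ge> 1 \<and> X n > 0 \<and> Y n > 0 \<and> A / 2 * real n ^ 3 \<le> real (l n)
             \<and> 1 \<le> N n \<and> real (N n) \<le> K * real n ^ 2"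
    using evX evY eventually_ge_at_top[of 1]
  proof eventually_elim
    case (elim n)
    have n3: "real n ^ 3 > 0" using elim by simp
    have x: "A / 2 * real n ^ 3 < real (X n)" using elim n3 by (simp add: field_simps)
    then have X0: "X n > 0" using A0 n3 by (metis mult_pos_pos half_gt_zero of_nat_0_less_iff order_less_trans)
    have Y0: "Y n > 0" using elim n3 by (simp add: zero_less_divide_iff)
    have "A / 2 * real n ^ 3 \<le> real (l n)" using x by (simp add: lXY)
    moreover have "N n \<ge> 1"
    proof -
      have "lattice_pts C n \<noteq> {}" using X0 by (auto simp: X_def)
      then show ?thesis using fin[of n] elim by (simp add: N_def Suc_le_eq card_gt_0_iff)
    qed
    ultimately show ?case using elim X0 Y0 card[of n] by (simp add: N_def)
  qed
  have alim: "(\<lambda>n. real (X n) / real (l n)) \<longlonglongrightarrow> \<alpha>"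
  proof -
    have "(\<lambda>n. (real (X n) / real n ^ 3) / (real (X n) / real n ^ 3 + real (Y n) / real n ^ 3)) \<longlonglongrightarrow> A / (A + B)"
      using A0 B0 by (intro tendsto_intros XA' YB') auto
    moreover have "\<forall>\<^sub>F n in sequentially. (real (X n) / real n ^ 3) / (real (X n) / real n ^ 3 + real (Y n) / real n ^ 3) = real (X n) / real (l n)"
      using eventually_ge_at_top[of 1] by eventually_elim (simp add: lXY add_divide_distrib[symmetric])
    ultimately show ?thesis unfolding \<alpha>_def by (rule Lim_transform_eventually)
  qed
  have blim: "(\<lambda>n. real (Y n) / real (l n)) \<longlonglongrightarrow> \<beta>"
  proof -
    have "(\<lambda>n. (real (Y n) / real n ^ 3) / (real (X n) / real n ^ 3 + real (Y n) / real n ^ 3)) \<longlonglongrightarrow> B / (A + B)"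
      using A0 B0 by (intro tendsto_intros XA' YB') auto
    moreover have "\<forall>\<^sub>F n in sequentially. (real (Y n) / real n ^ 3) / (real (X n) / real n ^ 3 + real (Y n) / real n ^ 3) = real (Y n) / real (l n)"
      using eventually_ge_at_top[of 1] by eventually_elim (simp add: lXY add_divide_distrib[symmetric])
    ultimately show ?thesis unfolding \<beta>_def by (rule Lim_transform_eventually)
  qed
  have powlim: "(\<lambda>n. (T + t) powr (real (X n) / real (l n)) * (T' + t) powr (real (Y n) / real (l n)))
      \<longlonglongrightarrow> (T + t) powr \<alpha> * (T' + t) powr \<beta>" if "T + t \<ge> 0" "T' + t \<ge> 0" for T T' t :: real
    by (intro tendsto_mult tendsto_powr2 alim blim tendsto_const) (use that al0 be0 in auto)
  let ?a = "\<lambda>n. vander_max C (E \<times> F) n powr (1 / real (deg_sum C n))"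
  have "limsup (\<lambda>n. ereal (?a n)) = ereal L"
  proof (rule limsup_squeeze[where lo = "\<lambda>n. TE powr (real (X n) / real (l n)) * TF powr (real (Y n) / real (l n))"])
    show "(\<lambda>n. TE powr (real (X n) / real (l n)) * TF powr (real (Y n) / real (l n))) \<longlonglongrightarrow> L"
      using powlim[of TE 0 TF] TE0 TF0 by (simp add: L_def)
    obtain P ME where PE: "monicdeg P" "1 \<le> ME" "\<forall>j. \<forall>z\<in>E. cmod (poly (P j) z) \<le> ME * (cheb E + 1) ^ j"
      using cheb_upper_family[OF E, of 1] by auto
    obtain Q MF where QF: "monicdeg Q" "1 \<le> MF" "\<forall>j. \<forall>z\<in>F. cmod (poly (Q j) z) \<le> MF * (cheb F + 1) ^ j"
      using cheb_upper_family[OF F, of 1] by auto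
    show "\<forall>\<^sub>F n in sequentially. TE powr (real (X n) / real (l n)) * TF powr (real (Y n) / real (l n)) \<le> ?a n"
      using ev
    proof eventually_elim
      case (elim n)
      have l0: "real (l n) > 0" using elim by (simp add: lXY)
      have "TE ^ X n * TF ^ Y n \<le> vander_max C (E \<times> F) n"
        unfolding vander_max_def TE_def TF_def X_def Y_def
        by (rule vander_bounds(2)[OF E F fin low PE(1) _ QF(1)]) (use elim PE QF in auto)
      then have "(TE ^ X n * TF ^ Y n) powr (1 / real (l n)) \<le> ?a n"
        using TE0 TF0 unfolding l_def by (intro powr_mono2) auto
      moreover have "(TE ^ X n * TF ^ Y n) powr (1 / real (l n)) = TE powr (real (X n) / real (l n)) * TF powr (real (Y n) / real (l n))"
        using elim by (simp only: powr_mult pow_powr_div[OF TE0 _ l0] pow_powr_div[OF TF0 _ l0])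
      ultimately show ?case by simp
    qed
  next
    fix \<eta> :: real assume eta: "0 < \<eta>"
    have "(\<lambda>k. (TE + 1 / real (Suc k)) powr \<alpha> * (TF + 1 / real (Suc k)) powr \<beta>) \<longlonglongrightarrow> (TE + 0) powr \<alpha> * (TF + 0) powr \<beta>"
      by (intro tendsto_mult tendsto_powr2 tendsto_add tendsto_const LIMSEQ_inverse_real_of_nat[unfolded inverse_eq_divide])
         (use TE0 TF0 al0 be0 in auto)
    then have "\<forall>\<^sub>F k in sequentially. (TE + 1 / real (Suc k)) powr \<alpha> * (TF + 1 / real (Suc k)) powr \<beta> < L + \<eta>"
      using eta by (intro order_tendstoD(2)) (auto simp: L_def)
    then obtain k where k: "(TE + 1 / real (Suc k)) powr \<alpha> * (TF + 1 / real (Suc k)) powr \<beta> < L + \<eta>"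
      by (auto simp: eventually_sequentially)
    define t where "t = 1 / real (Suc k)"
    have t0: "t > 0" by (simp add: t_def)
    obtain P ME where PE: "monicdeg P" "1 \<le> ME" "\<forall>j. \<forall>z\<in>E. cmod (poly (P j) z) \<le> ME * (cheb E + t) ^ j"
      using cheb_upper_family[OF E t0] by auto
    obtain Q MF where QF: "monicdeg Q" "1 \<le> MF" "\<forall>j. \<forall>z\<in>F. cmod (poly (Q j) z) \<le> MF * (cheb F + t) ^ j"
      using cheb_upper_family[OF F t0] by auto
    define M where "M = ME * MF"
    have M1: "M \<ge> 1" using PE(2) QF(2) mult_mono[of 1 ME 1 MF] by (simp add: M_def)
    define u where "u = (\<lambda>n. (fact (N n) * M ^ N n) powr (1 / real (l n)) *
        ((TE + t) powr (real (X n) / real (l n)) * (TF + t) powr (real (Y n) / real (l n))))"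
    have ulim: "u \<longlonglongrightarrow> 1 * ((TE + t) powr \<alpha> * (TF + t) powr \<beta>)"
      unfolding u_def
    proof (rule tendsto_mult)
      show "(\<lambda>n. (fact (N n) * M ^ N n) powr (1 / real (l n))) \<longlonglongrightarrow> 1"
        by (rule fact_pow_powr_lim[OF M1 K0 A0]) (use ev in \<open>eventually_elim, auto\<close>)
      show "(\<lambda>n. (TE + t) powr (real (X n) / real (l n)) * (TF + t) powr (real (Y n) / real (l n)))
        \<longlonglongrightarrow> (TE + t) powr \<alpha> * (TF + t) powr \<beta>"
        by (rule powlim) (use TE0 TF0 t0 in auto)
    qed
    have uev: "\<forall>\<^sub>F n in sequentially. ?a n \<le> u n"
      using ev
    proof eventually_elim
      case (elim n)
      have l0: "real (l n) > 0" using elim by (simp add: lXY)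
      have "vander_max C (E \<times> F) n \<le> fact (N n) * ((ME * MF) ^ N n * ((TE + t) ^ X n * (TF + t) ^ Y n))"
        unfolding vander_max_def TE_def TF_def X_def Y_def N_def
        by (rule vander_bounds(1)[OF E F fin low PE(1) _ QF(1)]) (use elim PE QF in auto)
      moreover have "0 \<le> vander_max C (E \<times> F) n"
      proof -
        have "TE ^ X n * TF ^ Y n \<le> vander_max C (E \<times> F) n"
          unfolding vander_max_def TE_def TF_def X_def Y_def
          by (rule vander_bounds(2)[OF E F fin low PE(1) _ QF(1)]) (use elim PE QF in auto)
        moreover have "0 \<le> TE ^ X n * TF ^ Y n" using TE0 TF0 by simp
        ultimately show ?thesis by linarith
      qed
      ultimately have "?a n \<le> (fact (N n) * ((ME * MF) ^ N n * ((TE + t) ^ X n * (TF + t) ^ Y n))) powr (1 / real (l n))"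
        unfolding l_def by (intro powr_mono2) auto
      also have "\<dots> = u n"
      proof -
        have a: "TE + t \<ge> 0" "TF + t \<ge> 0" using TE0 TF0 t0 by auto
        have "fact (N n) * ((ME * MF) ^ N n * ((TE + t) ^ X n * (TF + t) ^ Y n)) =
            (fact (N n) * M ^ N n) * ((TE + t) ^ X n * (TF + t) ^ Y n)"
          by (simp only: M_def mult.assoc)
        then show ?thesis
          using elim unfolding u_def
          by (simp only: powr_mult pow_powr_div[OF a(1) _ l0] pow_powr_div[OF a(2) _ l0])
      qed
      finally show ?case .
    qed
    show "\<exists>u U. u \<longlonglongrightarrow> U \<and> U \<le> L + \<eta> \<and> (\<forall>\<^sub>F n in sequentially. ?a n \<le> u n)"
    proof -
      have "1 * ((TE + t) powr \<alpha> * (TF + t) powr \<beta>) \<le> L + \<eta>" using k unfolding t_def by simp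
      then show ?thesis using ulim uev by blast
    qed
  qed
  then show ?thesis unfolding C_transfinite_diameter_def L_def TE_def TF_def \<alpha>_def \<beta>_def by simp
qed

lemma char_region:
  fixes C :: "(real \<times> real) set" and f :: "real \<Rightarrow> real" and b :: real
  assumes cpt: "compact C" and conv: "convex C"
    and quad: "\<And>x y. (x, y) \<in> C \<Longrightarrow> 0 \<le> x \<and> 0 \<le> y"
    and orig: "(0, 0) \<in> C" and bC: "(b, 0) \<in> C" and b0: "0 < b"
    and beyond: "\<And>x. b < x \<Longrightarrow> (x, 0) \<notin> C"
    and GC: "\<And>x. 0 \<le> x \<Longrightarrow> x \<le> b \<Longrightarrow> (x, f x) \<in> C"
    and front: "\<And>x y. (x, y) \<in> C \<Longrightarrow> x \<noteq> 0 \<Longrightarrow> y \<noteq> 0 \<Longrightarrow>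
                  (\<forall>e>0. \<exists>q. q \<notin> C \<and> dist q (x, y) < e) \<Longrightarrow> 0 \<le> x \<and> x \<le> b \<and> y = f x"
    and x0: "0 < x"
  shows "(x, y) \<in> C \<longleftrightarrow> x \<le> b \<and> 0 \<le> y \<and> y \<le> f x"
proof
  assume xy: "(x, y) \<in> C"
  have y0: "0 \<le> y" using quad[OF xy] by simp
  have "compact (fst ` C)" by (rule compact_continuous_image[OF continuous_on_fst[OF continuous_on_id] cpt])
  moreover have "fst ` C \<noteq> {}" using xy by blast
  ultimately obtain xs where xs: "xs \<in> fst ` C" "\<forall>t\<in>fst ` C. t \<le> xs"
    using compact_attains_sup by blast
  then obtain ys where ps: "(xs, ys) \<in> C" by auto
  have xxs: "x \<le> xs" using xs(2) xy by force
  have xsb: "xs \<le> b"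
  proof (cases "ys = 0")
    case True
    then show ?thesis using beyond ps by force
  next
    case False
    have "\<forall>e>0. \<exists>q. q \<notin> C \<and> dist q (xs, ys) < e"
    proof (intro allI impI)
      fix e :: real assume e: "0 < e"
      have "(xs + e / 2, ys) \<notin> C" using xs(2) e by force
      moreover have "dist (xs + e / 2, ys) (xs, ys) < e" using e by (simp add: dist_Pair_Pair dist_real_def)
      ultimately show "\<exists>q. q \<notin> C \<and> dist q (xs, ys) < e" by blast
    qed
    then show ?thesis using front[OF ps _ False] xxs x0 by force
  qed
  have xb: "x \<le> b" using xxs xsb by simp
  have fx0: "0 \<le> f x" using quad[OF GC[of x]] x0 xb by simp
  have "compact (snd ` (C \<inter> {p. fst p = x}))"
  proof (rule compact_continuous_image[OF continuous_on_snd[OF continuous_on_id]])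
    have "closed {p :: real \<times> real. fst p = x}"
      by (rule closed_Collect_eq) (intro continuous_intros)+
    then show "compact (C \<inter> {p. fst p = x})" using compact_Int_closed[OF cpt] by blast
  qed
  moreover have "snd ` (C \<inter> {p. fst p = x}) \<noteq> {}" using xy by force
  ultimately obtain ym where ym: "ym \<in> snd ` (C \<inter> {p. fst p = x})" "\<forall>t\<in>snd ` (C \<inter> {p. fst p = x}). t \<le> ym"
    using compact_attains_sup by blast
  have pm: "(x, ym) \<in> C" using ym(1) by auto
  have yym: "y \<le> ym" using ym(2) xy by force
  have "ym \<le> f x"
  proof (cases "ym = 0")
    case True then show ?thesis using fx0 by simp
  next
    case False
    have "\<forall>e>0. \<exists>q. q \<notin> C \<and> dist q (x, ym) < e"
    proof (intro allI impI)
      fix e :: real assume e: "0 < e"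
      have "(x, ym + e / 2) \<notin> C" using ym(2) e by force
      moreover have "dist (x, ym + e / 2) (x, ym) < e" using e by (simp add: dist_Pair_Pair dist_real_def)
      ultimately show "\<exists>q. q \<notin> C \<and> dist q (x, ym) < e" by blast
    qed
    then show ?thesis using front[OF pm _ False] x0 by force
  qed
  then show "x \<le> b \<and> 0 \<le> y \<and> y \<le> f x" using xb y0 yym by simp
next
  assume h: "x \<le> b \<and> 0 \<le> y \<and> y \<le> f x"
  have x0C: "(x, 0) \<in> C"
  proof -
    have "(1 - x / b) *\<^sub>R (0, 0) + (x / b) *\<^sub>R (b, 0) \<in> C"
      by (rule convexD[OF conv orig bC]) (use h x0 b0 in auto)
    then show ?thesis using b0 by simp
  qed
  have fxC: "(x, f x) \<in> C" using GC h x0 by simp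
  show "(x, y) \<in> C"
  proof (cases "f x = 0")
    case True
    then have "y = 0" using h by simp
    then show ?thesis using x0C by simp
  next
    case False
    then have fpos: "f x > 0" using h by simp
    have "(1 - y / f x) *\<^sub>R (x, 0) + (y / f x) *\<^sub>R (x, f x) \<in> C"
      by (rule convexD[OF conv x0C fxC]) (use h fpos in auto)
    moreover have "(1 - y / f x) *\<^sub>R (x, 0) + (y / f x) *\<^sub>R (x, f x) = (x, y)"
      using fpos by (simp add: algebra_simps)
    ultimately show ?thesis by simp
  qed
qed

lemma lattice_mem:
  assumes "n > 0"
  shows "(j1, j2) \<in> lattice_pts C n \<longleftrightarrow> (real j1 / real n, real j2 / real n) \<in> C"
proof
  assume "(j1, j2) \<in> lattice_pts C n"
  then obtain p where p: "p \<in> C" "(real j1, real j2) = real n *\<^sub>R p"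
    by (auto simp: lattice_pts_def dil_def)
  then have "p = (real j1 / real n, real j2 / real n)" using assms
    by (cases p) (auto simp: field_simps)
  then show "(real j1 / real n, real j2 / real n) \<in> C" using p by simp
next
  assume h: "(real j1 / real n, real j2 / real n) \<in> C"
  have "(real j1, real j2) = real n *\<^sub>R (real j1 / real n, real j2 / real n)" using assms by simp
  then have "(real j1, real j2) \<in> (\<lambda>p. real n *\<^sub>R p) ` C" using h by (intro image_eqI)
  then show "(j1, j2) \<in> lattice_pts C n" by (simp add: lattice_pts_def dil_def)
qed

lemma integrable_u_phi:
  fixes \<phi> :: "real \<Rightarrow> real"
  assumes anti: "\<And>u v. u \<le> v \<Longrightarrow> \<phi> v \<le> \<phi> u" and nn: "\<And>u. 0 \<le> \<phi> u" and R: "0 \<le> R"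
  shows "(\<lambda>u. u * \<phi> u) integrable_on {0..R}"
proof -
  have m1: "mono_on {0..R} (\<lambda>u. - (R * \<phi> u))"
    using anti R by (auto simp: mono_on_def intro!: mult_left_mono)
  have m2: "mono_on {0..R} (\<lambda>u. - ((R - u) * \<phi> u))"
    using anti nn by (auto simp: mono_on_def intro!: mult_mono)
  have i1: "(\<lambda>u. R * \<phi> u) integrable_on {0..R}"
    using integrable_neg[OF integrable_on_mono_on[OF m1]] by simp
  have i2: "(\<lambda>u. (R - u) * \<phi> u) integrable_on {0..R}"
    using integrable_neg[OF integrable_on_mono_on[OF m2]] by simp
  have "(\<lambda>u. R * \<phi> u - (R - u) * \<phi> u) integrable_on {0..R}" by (rule integrable_diff[OF i1 i2])
  then show ?thesis by (simp add: algebra_simps)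
qed

lemma integral_pieces:
  fixes h :: "real \<Rightarrow> real"
  assumes n: "n > 0" and int: "h integrable_on {0..real m / n}"
  shows "integral {0..real m / n} h = (\<Sum>j<m. integral {real j / n..real (Suc j) / n} h)"
  using int
proof (induction m)
  case 0 then show ?case by simp
next
  case (Suc m)
  have le: "real m / n \<le> real (Suc m) / n" using n by (simp add: divide_right_mono)
  have int': "h integrable_on {0..real m / n}"
    by (rule integrable_on_subinterval[OF Suc.prems]) (use le in auto)
  have "integral {0..real (Suc m) / n} h = integral {0..real m / n} h + integral {real m / n..real (Suc m) / n} h"
    by (rule Henstock_Kurzweil_Integration.integral_combine[symmetric]) (use n le Suc.prems in auto)
  then show ?case using Suc.IH[OF int'] by simp
qed

lemma integral_const_bound:
  fixes h :: "real \<Rightarrow> real"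
  assumes "c \<le> d" "h integrable_on {c..d}" "\<And>u. u \<in> {c..d} \<Longrightarrow> k \<le> h u"
  shows "(d - c) * k \<le> integral {c..d} h"
proof -
  have "integral {c..d} (\<lambda>_. k) \<le> integral {c..d} h"
    by (rule integral_le) (use assms in auto)
  then show ?thesis using assms(1) by simp
qed

lemma integral_const_bound':
  fixes h :: "real \<Rightarrow> real"
  assumes "c \<le> d" "h integrable_on {c..d}" "\<And>u. u \<in> {c..d} \<Longrightarrow> h u \<le> k"
  shows "integral {c..d} h \<le> (d - c) * k"
proof -
  have "integral {c..d} h \<le> integral {c..d} (\<lambda>_. k)"
    by (rule integral_le) (use assms in auto)
  then show ?thesis using assms(1) by simp
qed


lemma riemann_bound:
  fixes \<phi> :: "real \<Rightarrow> real" and n :: real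
  assumes anti: "\<And>u v. u \<le> v \<Longrightarrow> \<phi> v \<le> \<phi> u" and nn: "\<And>u. 0 \<le> \<phi> u" and ub: "\<And>u. \<phi> u \<le> D"
    and zero: "\<And>u. b < u \<Longrightarrow> \<phi> u = 0" and b0: "0 \<le> b" and n: "0 < n" and bK: "b \<le> real K / n"
  shows "\<bar>(\<Sum>j<K. real (Suc j) / n * \<phi> (real (Suc j) / n) / n) - integral {0..b} (\<lambda>u. u * \<phi> u)\<bar>
           \<le> real (K + 1) * D / n ^ 2"
proof -
  define \<psi> where "\<psi> = (\<lambda>u. u * \<phi> u)"
  define T where "T = (\<Sum>j<K. real (Suc j) / n * \<phi> (real (Suc j) / n) / n)"
  have intR: "\<psi> integrable_on {0..R}" if "0 \<le> R" for R
    unfolding \<psi>_def by (rule integrable_u_phi[OF anti nn that])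
  have Ieq: "integral {0..R} \<psi> = integral {0..b} \<psi>" if R: "b \<le> R" for R
  proof -
    have "integral {0..b} \<psi> + integral {b..R} \<psi> = integral {0..R} \<psi>"
      by (rule Henstock_Kurzweil_Integration.integral_combine) (use b0 R intR[of R] in auto)
    moreover have "integral {b..R} \<psi> = integral {b..R} (\<lambda>_. 0::real)"
      by (rule integral_spike[of "{b}"]) (auto simp: \<psi>_def zero)
    ultimately show ?thesis by simp
  qed
  have D0: "0 \<le> D" using nn ub order_trans by blast
  have piece_int: "\<psi> integrable_on {real j / n..real (Suc j) / n}" for j
    by (rule integrable_on_subinterval[OF intR[of "real (Suc j) / n"]]) (use n in \<open>auto simp: divide_right_mono\<close>)
  have jle: "real j / n \<le> real (Suc j) / n" for j using n by (simp add: divide_right_mono)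
  have len: "real (Suc j) / n - real j / n = 1 / n" for j using n by (simp add: field_simps)
  have low: "1 / n * (real j / n * \<phi> (real (Suc j) / n)) \<le> integral {real j / n..real (Suc j) / n} \<psi>" for j
  proof -
    have "(real (Suc j) / n - real j / n) * (real j / n * \<phi> (real (Suc j) / n)) \<le> integral {real j / n..real (Suc j) / n} \<psi>"
    proof (rule integral_const_bound[OF jle piece_int])
      fix u assume u: "u \<in> {real j / n..real (Suc j) / n}"
      have u0: "0 \<le> u" using u n by (smt (verit) atLeastAtMost_iff divide_nonneg_pos of_nat_0_le_iff)
      show "real j / n * \<phi> (real (Suc j) / n) \<le> \<psi> u"
        unfolding \<psi>_def using u u0 n nn anti by (intro mult_mono) auto
    qed
    then show ?thesis unfolding len by simp
  qed
  have up: "integral {real j / n..real (Suc j) / n} \<psi> \<le> 1 / n * (real (Suc j) / n * \<phi> (real j / n))" for j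
  proof -
    have "integral {real j / n..real (Suc j) / n} \<psi> \<le> (real (Suc j) / n - real j / n) * (real (Suc j) / n * \<phi> (real j / n))"
    proof (rule integral_const_bound'[OF jle piece_int])
      fix u assume u: "u \<in> {real j / n..real (Suc j) / n}"
      have u0: "0 \<le> u" using u n by (smt (verit) atLeastAtMost_iff divide_nonneg_pos of_nat_0_le_iff)
      show "\<psi> u \<le> real (Suc j) / n * \<phi> (real j / n)"
        unfolding \<psi>_def using u u0 nn anti by (intro mult_mono) auto
    qed
    then show ?thesis unfolding len by simp
  qed
  have I1: "integral {0..b} \<psi> = (\<Sum>j<K. integral {real j / n..real (Suc j) / n} \<psi>)"
  proof -
    have "integral {0..b} \<psi> = integral {0..real K / n} \<psi>" by (rule Ieq[OF bK, symmetric])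
    also have "\<dots> = (\<Sum>j<K. integral {real j / n..real (Suc j) / n} \<psi>)"
      by (rule integral_pieces[OF n intR]) (use n in simp)
    finally show ?thesis .
  qed
  have I2: "integral {0..b} \<psi> = (\<Sum>j<Suc K. integral {real j / n..real (Suc j) / n} \<psi>)"
  proof -
    have bK': "b \<le> real (Suc K) / n" using bK n by (smt (verit) divide_right_mono of_nat_Suc)
    have "integral {0..b} \<psi> = integral {0..real (Suc K) / n} \<psi>" by (rule Ieq[OF bK', symmetric])
    also have "\<dots> = (\<Sum>j<Suc K. integral {real j / n..real (Suc j) / n} \<psi>)"
      by (rule integral_pieces[OF n intR]) (use n in simp)
    finally show ?thesis .
  qed
  have L: "T - integral {0..b} \<psi> \<le> real (K + 1) * D / n ^ 2"
  proof -
    have "(\<Sum>j<K. 1 / n * (real j / n * \<phi> (real (Suc j) / n))) \<le> integral {0..b} \<psi>"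
      unfolding I1 by (intro sum_mono low)
    moreover have "T - (\<Sum>j<K. 1 / n * (real j / n * \<phi> (real (Suc j) / n))) = (\<Sum>j<K. \<phi> (real (Suc j) / n) / n ^ 2)"
      unfolding T_def sum_subtractf[symmetric] using n
      by (intro sum.cong refl) (simp add: field_simps power2_eq_square)
    moreover have "(\<Sum>j<K. \<phi> (real (Suc j) / n) / n ^ 2) \<le> (\<Sum>j<K. D / n ^ 2)"
      using ub n by (intro sum_mono divide_right_mono) auto
    moreover have "(\<Sum>j<K. D / n ^ 2) \<le> real (K + 1) * D / n ^ 2"
      using D0 n by (simp add: divide_right_mono mult_right_mono)
    ultimately show ?thesis by linarith
  qed
  have U: "integral {0..b} \<psi> - T \<le> real (K + 1) * D / n ^ 2"
  proof -
    have "integral {0..b} \<psi> \<le> (\<Sum>j<Suc K. 1 / n * (real (Suc j) / n * \<phi> (real j / n)))"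
      unfolding I2 by (intro sum_mono up)
    also have "\<dots> = (\<Sum>j<Suc K. real j / n * \<phi> (real j / n) / n) + (\<Sum>j<Suc K. \<phi> (real j / n) / n ^ 2)"
      unfolding sum.distrib[symmetric] using n
      by (intro sum.cong refl) (simp add: field_simps power2_eq_square)
    also have "(\<Sum>j<Suc K. real j / n * \<phi> (real j / n) / n) = T"
      unfolding T_def sum.lessThan_Suc_shift by simp
    also have "(\<Sum>j<Suc K. \<phi> (real j / n) / n ^ 2) \<le> (\<Sum>j<Suc K. D / n ^ 2)"
      using ub n by (intro sum_mono divide_right_mono) auto
    also have "(\<Sum>j<Suc K. D / n ^ 2) = real (K + 1) * D / n ^ 2" by simp
    finally show ?thesis by simp
  qed
  show ?thesis using L U by (simp add: T_def \<psi>_def abs_le_iff)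
qed


lemma card_nat_le_real:
  fixes h :: real
  assumes "0 \<le> h"
  shows "h \<le> real (card {j::nat. real j \<le> h}) \<and> real (card {j::nat. real j \<le> h}) \<le> h + 1"
proof -
  have eq: "{j::nat. real j \<le> h} = {..nat \<lfloor>h\<rfloor>}"
  proof -
    have "real j \<le> h \<longleftrightarrow> j \<le> nat \<lfloor>h\<rfloor>" for j :: nat
    proof -
      have "real j \<le> h \<longleftrightarrow> int j \<le> \<lfloor>h\<rfloor>" by (simp add: le_floor_iff)
      also have "\<dots> \<longleftrightarrow> j \<le> nat \<lfloor>h\<rfloor>" using assms by (simp add: le_nat_iff)
      finally show ?thesis .
    qed
    then show ?thesis by auto
  qed
  have c: "real (card {j::nat. real j \<le> h}) = real_of_int \<lfloor>h\<rfloor> + 1"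
    unfolding eq using assms by simp
  show ?thesis unfolding c by linarith
qed

lemma colsum_limit:
  fixes C :: "(real \<times> real) set" and f :: "real \<Rightarrow> real" and b \<delta> e :: real
  assumes b0: "0 < b" and bd: "b \<le> \<delta>" and e0: "0 < e" and eb: "e \<le> b"
    and char: "\<And>x y. 0 < x \<Longrightarrow> (x, y) \<in> C \<longleftrightarrow> x \<le> b \<and> 0 \<le> y \<and> y \<le> f x"
    and quad: "\<And>x y. (x, y) \<in> C \<Longrightarrow> 0 \<le> x \<and> 0 \<le> y \<and> x + y \<le> \<delta>"
    and mono: "\<And>x1 x2. 0 < x1 \<Longrightarrow> x1 \<le> x2 \<Longrightarrow> x2 \<le> b \<Longrightarrow> f x2 \<le> f x1"
    and fbd: "\<And>x. 0 < x \<Longrightarrow> x \<le> b \<Longrightarrow> 0 \<le> f x \<and> f x \<le> \<delta>"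
    and fe: "\<And>x. 0 < x \<Longrightarrow> x \<le> e \<Longrightarrow> e - x \<le> f x"
  shows "(\<lambda>n. real (\<Sum>I\<in>lattice_pts C n. fst I) / real n ^ 3) \<longlonglongrightarrow> integral {0..b} (\<lambda>u. u * f u)"
    and "integral {0..b} (\<lambda>u. u * f u) > 0"
proof -
  define \<phi> where "\<phi> = (\<lambda>u. if u \<le> 0 then \<delta> else if u \<le> b then f u else 0)"
  have d0: "0 < \<delta>" using b0 bd by simp
  have anti: "\<phi> v \<le> \<phi> u" if "u \<le> v" for u v
    using that mono[of u v] fbd[of u] fbd[of v] d0 by (auto simp: \<phi>_def)
  have nn: "0 \<le> \<phi> u" for u using fbd[of u] d0 by (auto simp: \<phi>_def)
  have ub: "\<phi> u \<le> \<delta>" for u using fbd[of u] d0 by (auto simp: \<phi>_def)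
  have zero: "\<phi> u = 0" if "b < u" for u using that b0 by (auto simp: \<phi>_def)
  have Ieq: "integral {0..b} (\<lambda>u. u * \<phi> u) = integral {0..b} (\<lambda>u. u * f u)"
    by (rule integral_cong) (auto simp: \<phi>_def)
  have intR: "(\<lambda>u. u * \<phi> u) integrable_on {0..R}" if "0 \<le> R" for R
    by (rule integrable_u_phi[OF anti nn that])
  define I where "I = integral {0..b} (\<lambda>u. u * \<phi> u)"
  have "I > 0"
  proof -
    let ?\<psi> = "\<lambda>u. u * \<phi> u"
    have e4: "0 \<le> e / 4" "e / 4 \<le> e / 2" "e / 2 \<le> b" using e0 eb by auto
    have ib: "?\<psi> integrable_on {0..b}" using intR b0 by simp
    have i2: "?\<psi> integrable_on {0..e / 2}" by (rule integrable_on_subinterval[OF ib]) (use e4 in auto)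
    have "integral {0..e / 2} ?\<psi> + integral {e / 2..b} ?\<psi> = I"
      unfolding I_def by (rule Henstock_Kurzweil_Integration.integral_combine) (use e4 ib in auto)
    moreover have "integral {0..e / 4} ?\<psi> + integral {e / 4..e / 2} ?\<psi> = integral {0..e / 2} ?\<psi>"
      by (rule Henstock_Kurzweil_Integration.integral_combine) (use e4 i2 in auto)
    moreover have "0 \<le> integral {e / 2..b} ?\<psi>"
      by (rule integral_nonneg[OF integrable_on_subinterval[OF ib]]) (use e4 nn in auto)
    moreover have "0 \<le> integral {0..e / 4} ?\<psi>"
      by (rule integral_nonneg[OF integrable_on_subinterval[OF ib]]) (use e4 nn in auto)
    moreover have "(e / 2 - e / 4) * (e / 4 * (e / 2)) \<le> integral {e / 4..e / 2} ?\<psi>"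
    proof (rule integral_const_bound)
      show "?\<psi> integrable_on {e / 4..e / 2}" by (rule integrable_on_subinterval[OF ib]) (use e4 in auto)
      fix u assume u: "u \<in> {e / 4..e / 2}"
      then have u0: "0 < u" "u \<le> b" "u \<le> e" using e0 e4 by auto
      then have "\<phi> u = f u" by (simp add: \<phi>_def)
      moreover have "e / 2 \<le> f u" using fe[OF u0(1) u0(3)] u by simp
      ultimately show "e / 4 * (e / 2) \<le> ?\<psi> u" using u e0 by (intro mult_mono) auto
    qed (use e4 in auto)
    moreover have "0 < (e / 2 - e / 4) * (e / 4 * (e / 2))" using e0 by simp
    ultimately show ?thesis by linarith
  qed
  then show "integral {0..b} (\<lambda>u. u * f u) > 0" using Ieq by (simp add: I_def)
  define K where "K = (\<lambda>n::nat. nat \<lceil>real n * \<delta>\<rceil>)"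
  define bnd where "bnd = (\<lambda>n::nat. (real n * \<delta> + 1) ^ 2 / real n ^ 3 + (real n * \<delta> + 2) * \<delta> / real n ^ 2)"
  have bndlim: "bnd \<longlonglongrightarrow> 0" unfolding bnd_def using d0 by real_asymp
  have main: "\<bar>real (\<Sum>I\<in>lattice_pts C n. fst I) / real n ^ 3 - I\<bar> \<le> bnd n" if n1: "n \<ge> 1" for n
  proof -
    define S where "S = lattice_pts C n"
    define sl where "sl = (\<lambda>j. {j2. (j, j2) \<in> S})"
    have n0: "real n > 0" using n1 by simp
    have Kr: "real (K n) = real_of_int \<lceil>real n * \<delta>\<rceil>" unfolding K_def using d0 n0 by simp
    have Kge: "real n * \<delta> \<le> real (K n)" unfolding Kr by (rule le_of_int_ceiling)
    have Kle: "real (K n) \<le> real n * \<delta> + 1" unfolding Kr by (rule of_int_ceiling_le_add_one)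
    have mem: "(j1, j2) \<in> S \<longleftrightarrow> (real j1 / real n, real j2 / real n) \<in> C" for j1 j2
      unfolding S_def using lattice_mem[of n j1 j2 C] n1 by simp
    have Ssub: "S \<subseteq> {..K n} \<times> {..K n}"
    proof
      fix p assume "p \<in> S"
      then obtain j1 j2 where p: "p = (j1, j2)" "(real j1 / real n, real j2 / real n) \<in> C"
        using mem by (cases p) auto
      then have "real j1 / real n + real j2 / real n \<le> \<delta>" using quad by blast
      then have "real j1 + real j2 \<le> real n * \<delta>" using n0 by (simp add: field_simps add_divide_distrib[symmetric])
      then have "real j1 \<le> real (K n)" "real j2 \<le> real (K n)" using Kge by auto
      then show "p \<in> {..K n} \<times> {..K n}" using p by auto
    qed
    have finsl: "finite (sl j)" for j
      by (rule finite_subset[of _ "{..K n}"]) (use Ssub in \<open>auto simp: sl_def\<close>)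
    have SSig: "S = Sigma {..K n} sl" using Ssub by (auto simp: sl_def)
    have X: "(\<Sum>I\<in>S. fst I) = (\<Sum>j<K n. Suc j * card (sl (Suc j)))"
    proof -
      have "(\<Sum>I\<in>S. fst I) = (\<Sum>(j, j2)\<in>Sigma {..K n} sl. j)" unfolding SSig by (simp add: case_prod_beta)
      also have "\<dots> = (\<Sum>j\<in>{..K n}. \<Sum>j2\<in>sl j. j)" by (rule sum.Sigma[symmetric]) (use finsl in auto)
      also have "\<dots> = (\<Sum>j<Suc (K n). j * card (sl j))" by (simp add: lessThan_Suc_atMost mult.commute)
      also have "\<dots> = (\<Sum>j<K n. Suc j * card (sl (Suc j)))" unfolding sum.lessThan_Suc_shift by simp
      finally show ?thesis .
    qed
    have cb: "\<bar>real (card (sl j)) - real n * \<phi> (real j / real n)\<bar> \<le> 1" if j1: "j \<ge> 1" for j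
    proof -
      have jn: "real j / real n > 0" using j1 n0 by simp
      show ?thesis
      proof (cases "real j / real n \<le> b")
        case True
        have fnn: "0 \<le> f (real j / real n)" using fbd[OF jn True] by simp
        have "sl j = {j2::nat. real j2 \<le> real n * f (real j / real n)}"
        proof (intro Set.set_eqI)
          fix j2
          have "j2 \<in> sl j \<longleftrightarrow> real j2 / real n \<le> f (real j / real n)"
            unfolding sl_def using mem char[OF jn] True n0 by simp
          also have "\<dots> \<longleftrightarrow> real j2 \<le> real n * f (real j / real n)"
            using n0 by (simp add: divide_le_eq mult.commute)
          finally show "j2 \<in> sl j \<longleftrightarrow> j2 \<in> {j2::nat. real j2 \<le> real n * f (real j / real n)}" by simp
        qed
        moreover have "\<phi> (real j / real n) = f (real j / real n)" using jn True by (simp add: \<phi>_def)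
        ultimately show ?thesis using card_nat_le_real[of "real n * f (real j / real n)"] fnn n0
          by (simp add: abs_le_iff)
      next
        case False
        have "sl j = {}" unfolding sl_def using mem char[OF jn] False by auto
        moreover have "\<phi> (real j / real n) = 0" using False by (intro zero) simp
        ultimately show ?thesis by simp
      qed
    qed
    define T where "T = (\<Sum>j<K n. real (Suc j) / real n * \<phi> (real (Suc j) / real n) / real n)"
    have TI: "\<bar>T - I\<bar> \<le> real (K n + 1) * \<delta> / real n ^ 2"
      unfolding T_def I_def
    proof (rule riemann_bound[OF anti nn ub zero])
      have "b * real n \<le> \<delta> * real n" using bd n0 by (simp add: mult_right_mono)
      then have "b * real n \<le> real (K n)" using Kge by (simp add: mult.commute)
      then show "b \<le> real (K n) / real n" using n0 by (simp add: field_simps)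
    qed (use b0 n0 in auto)
    have XT: "\<bar>real (\<Sum>I\<in>S. fst I) / real n ^ 3 - T\<bar> \<le> real (K n) ^ 2 / real n ^ 3"
    proof -
      have "real (\<Sum>I\<in>S. fst I) / real n ^ 3 - T =
          (\<Sum>j<K n. real (Suc j) * (real (card (sl (Suc j))) - real n * \<phi> (real (Suc j) / real n))) / real n ^ 3"
      proof -
        have e1: "real (\<Sum>I\<in>S. fst I) = (\<Sum>j<K n. real (Suc j) * real (card (sl (Suc j))))"
          unfolding X by (simp only: of_nat_sum of_nat_mult)
        have e2: "T = (\<Sum>j<K n. real (Suc j) * (real n * \<phi> (real (Suc j) / real n))) / real n ^ 3"
          unfolding T_def sum_divide_distrib
          by (intro sum.cong refl) (use n0 in \<open>simp add: field_simps power3_eq_cube\<close>)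
        have e3: "(\<Sum>j<K n. real (Suc j) * (real (card (sl (Suc j))) - real n * \<phi> (real (Suc j) / real n)))
            = (\<Sum>j<K n. real (Suc j) * real (card (sl (Suc j)))) - (\<Sum>j<K n. real (Suc j) * (real n * \<phi> (real (Suc j) / real n)))"
          by (simp only: right_diff_distrib sum_subtractf)
        show ?thesis unfolding e1 e2 e3 by (simp add: diff_divide_distrib)
      qed
      moreover have "\<bar>\<Sum>j<K n. real (Suc j) * (real (card (sl (Suc j))) - real n * \<phi> (real (Suc j) / real n))\<bar>
          \<le> (\<Sum>j<K n. real (K n))"
      proof -
        have "\<bar>\<Sum>j<K n. real (Suc j) * (real (card (sl (Suc j))) - real n * \<phi> (real (Suc j) / real n))\<bar>
            \<le> (\<Sum>j<K n. \<bar>real (Suc j) * (real (card (sl (Suc j))) - real n * \<phi> (real (Suc j) / real n))\<bar>)"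
          by (rule sum_abs)
        also have "\<dots> \<le> (\<Sum>j<K n. real (K n))"
        proof (rule sum_mono)
          fix j assume "j \<in> {..<K n}"
          then have "real (Suc j) \<le> real (K n)" by simp
          moreover have "\<bar>real (card (sl (Suc j))) - real n * \<phi> (real (Suc j) / real n)\<bar> \<le> 1" by (rule cb) simp
          ultimately show "\<bar>real (Suc j) * (real (card (sl (Suc j))) - real n * \<phi> (real (Suc j) / real n))\<bar> \<le> real (K n)"
            by (simp add: abs_mult) (metis mult_mono mult_1_right of_nat_0_le_iff abs_ge_zero)
        qed
        finally show ?thesis .
      qed
      ultimately show ?thesis using n0 by (simp add: abs_divide divide_right_mono power2_eq_square)
    qed
    have "\<bar>real (\<Sum>I\<in>S. fst I) / real n ^ 3 - I\<bar> \<le> real (K n) ^ 2 / real n ^ 3 + real (K n + 1) * \<delta> / real n ^ 2"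
      using XT TI by linarith
    also have "\<dots> \<le> bnd n"
      unfolding bnd_def
    proof (intro add_mono divide_right_mono mult_right_mono power_mono)
      show "real (K n) \<le> real n * \<delta> + 1" by (rule Kle)
      show "real (K n + 1) \<le> real n * \<delta> + 2" using Kle by simp
    qed (use d0 in auto)
    finally show ?thesis by (simp add: S_def)
  qed
  have "(\<lambda>n. real (\<Sum>I\<in>lattice_pts C n. fst I) / real n ^ 3 - I) \<longlonglongrightarrow> 0"
  proof (rule Lim_null_comparison[OF _ bndlim])
    show "\<forall>\<^sub>F n in sequentially. norm (real (\<Sum>I\<in>lattice_pts C n. fst I) / real n ^ 3 - I) \<le> bnd n"
      using eventually_ge_at_top[of 1] by eventually_elim (use main in auto)
  qed
  then have "(\<lambda>n. real (\<Sum>I\<in>lattice_pts C n. fst I) / real n ^ 3) \<longlonglongrightarrow> I" by (rule LIM_zero_cancel)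
  then show "(\<lambda>n. real (\<Sum>I\<in>lattice_pts C n. fst I) / real n ^ 3) \<longlonglongrightarrow> integral {0..b} (\<lambda>u. u * f u)"
    using Ieq by (simp add: I_def)
qed

lemma dil_simplex_mem:
  assumes "0 < t"
  shows "(x, y) \<in> dil t Sigma_simplex \<longleftrightarrow> 0 \<le> x \<and> 0 \<le> y \<and> x + y \<le> t"
proof
  assume "(x, y) \<in> dil t Sigma_simplex"
  then obtain p q where pq: "0 \<le> p" "0 \<le> q" "p + q \<le> 1" "(x, y) = t *\<^sub>R (p, q)"
    by (auto simp: dil_def Sigma_simplex_def)
  then have xy: "x = t * p" "y = t * q" by auto
  have "t * (p + q) \<le> t * 1" using pq assms by (intro mult_left_mono) auto
  then show "0 \<le> x \<and> 0 \<le> y \<and> x + y \<le> t"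
    using pq assms xy by (simp add: distrib_left)
next
  assume h: "0 \<le> x \<and> 0 \<le> y \<and> x + y \<le> t"
  have "(x / t, y / t) \<in> Sigma_simplex"
    using h assms by (auto simp: Sigma_simplex_def add_divide_distrib[symmetric] divide_le_eq)
  moreover have "(x, y) = t *\<^sub>R (x / t, y / t)" using assms by simp
  ultimately show "(x, y) \<in> dil t Sigma_simplex" unfolding dil_def by blast
qed

theorem theorem5p1:
  fixes C :: "(real \<times> real) set" and \<epsilon> \<delta> a b :: real
    and f g :: "real \<Rightarrow> real" and E F :: "complex set"
  assumes conv: "convex C" and cpt: "compact C" and int: "interior C \<noteq> {}"
    and eps: "0 < \<epsilon>" and epsdelta: "\<epsilon> < \<delta>"
    and inner: "dil \<epsilon> Sigma_simplex \<subseteq> C" and outer: "C \<subseteq> dil \<delta> Sigma_simplex"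
    and lower: "\<forall>n::nat. n \<ge> 1 \<longrightarrow> (\<forall>j1 j2::nat. (j1, j2) \<in> lattice_pts C n \<longrightarrow>
                   (\<forall>k1 k2::nat. k1 \<le> j1 \<and> k2 \<le> j2 \<longrightarrow> (k1, k2) \<in> lattice_pts C n))"
    and a_pos: "0 < a" and b_pos: "0 < b"
    and ext_b: "(b, 0) extreme_point_of C" and ext_a: "(0, a) extreme_point_of C"
    and graph_f: "outer_face C = {(x, f x) | x. 0 \<le> x \<and> x \<le> b}"
    and graph_g: "outer_face C = {(g y, y) | y. 0 \<le> y \<and> y \<le> a}"
    and E: "compact E" "E \<noteq> {}" and F: "compact F" "F \<noteq> {}"
  shows "C_transfinite_diameter C (E \<times> F) =
           ereal (transfinite_diameter E powr
                    (integral {0..b} (\<lambda>u. u * f u) /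
                      (integral {0..b} (\<lambda>u. u * f u) + integral {0..a} (\<lambda>u. u * g u)))
                  * transfinite_diameter F powr
                    (integral {0..a} (\<lambda>u. u * g u) /
                      (integral {0..b} (\<lambda>u. u * f u) + integral {0..a} (\<lambda>u. u * g u))))
       \<and> (integral {0..b} (\<lambda>u. u * f u) = integral {0..a} (\<lambda>u. u * g u) \<longrightarrow>
           C_transfinite_diameter C (E \<times> F) =
             ereal ((transfinite_diameter E * transfinite_diameter F) powr (1/2)))"
proof -
  have d0: "0 < \<delta>" using eps epsdelta by simp
  have Q1: "0 \<le> x \<and> 0 \<le> y \<and> x + y \<le> \<delta>" if "(x, y) \<in> C" for x y
    using outer that dil_simplex_mem[OF d0] by blast
  have Q2: "(x, y) \<in> C" if "0 \<le> x" "0 \<le> y" "x + y \<le> \<epsilon>" for x y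
    using inner that dil_simplex_mem[OF eps] by blast
  have origC: "(0, 0) \<in> C" using Q2 eps by simp
  have bC: "(b, 0) \<in> C" using ext_b by (simp add: extreme_point_of_def)
  have aC: "(0, a) \<in> C" using ext_a by (simp add: extreme_point_of_def)
  have closedC: "closed C" using cpt by (simp add: compact_imp_closed)
  have ofC: "outer_face C \<subseteq> C"
    unfolding outer_face_def
    by (rule closure_minimal[OF _ closedC]) (use frontier_subset_closed[OF closedC] in blast)
  have GCf: "(x, f x) \<in> C" if "0 \<le> x" "x \<le> b" for x using ofC graph_f that by blast
  have GCg: "(g y, y) \<in> C" if "0 \<le> y" "y \<le> a" for y using ofC graph_g that by blast
  have inof: "(x, y) \<in> outer_face C"
    if xy: "(x, y) \<in> C" "x \<noteq> 0" "y \<noteq> 0" and nb: "\<forall>e>0. \<exists>q. q \<notin> C \<and> dist q (x, y) < e" for x y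
  proof -
    have "(x, y) \<notin> interior C"
    proof
      assume "(x, y) \<in> interior C"
      then obtain e where e0: "e > 0" "ball (x, y) e \<subseteq> interior C"
        using open_interior[of C] unfolding open_contains_ball by blast
      then have e: "e > 0" "ball (x, y) e \<subseteq> C" using interior_subset[of C] by auto
      then obtain q where q: "q \<notin> C" "dist q (x, y) < e" using nb by blast
      have "q \<in> ball (x, y) e" using q(2) by (simp add: dist_commute)
      then show False using q(1) e(2) by blast
    qed
    have cl: "(x, y) \<in> closure C" by (rule closure_subset[THEN subsetD, OF xy(1)])
    have fr: "(x, y) \<in> frontier C" unfolding frontier_def by (rule DiffI[OF cl \<open>(x, y) \<notin> interior C\<close>])
    have "(x, y) \<in> frontier C - {p. fst p = 0 \<or> snd p = 0}" using fr xy by simp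
    then show ?thesis unfolding outer_face_def by (rule closure_subset[THEN subsetD])
  qed
  have beyond_b: "(x, 0) \<notin> C" if "b < x" for x
  proof
    assume xC: "(x, 0) \<in> C"
    have "(b, 0) \<in> open_segment (0, 0) (x, 0)"
    proof -
      have x0: "x > 0" using that b_pos by simp
      have "(b, 0) = (1 - b / x) *\<^sub>R (0, 0) + (b / x) *\<^sub>R (x, 0)" using x0 by simp
      moreover have "0 \<le> b / x" "b / x \<le> 1" using x0 b_pos that by auto
      ultimately have "(b, 0) \<in> closed_segment (0, 0) (x, 0)" unfolding closed_segment_def by blast
      then show ?thesis unfolding open_segment_def using that b_pos by auto
    qed
    then show False using ext_b origC xC by (auto simp: extreme_point_of_def)
  qed
  have beyond_a: "(0, y) \<notin> C" if "a < y" for y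
  proof
    assume yC: "(0, y) \<in> C"
    have "(0, a) \<in> open_segment (0, 0) (0, y)"
    proof -
      have y0: "y > 0" using that a_pos by simp
      have "(0, a) = (1 - a / y) *\<^sub>R (0, 0) + (a / y) *\<^sub>R (0, y)" using y0 by simp
      moreover have "0 \<le> a / y" "a / y \<le> 1" using y0 a_pos that by auto
      ultimately have "(0, a) \<in> closed_segment (0, 0) (0, y)" unfolding closed_segment_def by blast
      then show ?thesis unfolding open_segment_def using that a_pos by auto
    qed
    then show False using ext_a origC yC by (auto simp: extreme_point_of_def)
  qed
  have charf: "(x, y) \<in> C \<longleftrightarrow> x \<le> b \<and> 0 \<le> y \<and> y \<le> f x" if x0: "0 < x" for x y
  proof (rule char_region[OF cpt conv _ origC bC b_pos beyond_b GCf _ x0])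
    show "0 \<le> x \<and> 0 \<le> y" if "(x, y) \<in> C" for x y using Q1[OF that] by simp
    fix x y assume h: "(x, y) \<in> C" "x \<noteq> 0" "y \<noteq> 0" "\<forall>e>0. \<exists>q. q \<notin> C \<and> dist q (x, y) < e"
    have "(x, y) \<in> outer_face C" by (rule inof[OF h])
    then show "0 \<le> x \<and> x \<le> b \<and> y = f x" using graph_f by auto
  qed
  define C' where "C' = (\<lambda>p. (snd p, fst p)) ` C"
  have memC': "(x, y) \<in> C' \<longleftrightarrow> (y, x) \<in> C" for x y
    unfolding C'_def by (auto simp: image_iff) (metis fst_conv snd_conv)
  have cptC': "compact C'" unfolding C'_def
    by (rule compact_continuous_image[OF _ cpt]) (intro continuous_intros)
  have convC': "convex C'"
    unfolding convex_def
  proof (intro ballI allI impI)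
    fix p q :: "real \<times> real" and u v :: real
    assume pq: "p \<in> C'" "q \<in> C'" and uv: "0 \<le> u" "0 \<le> v" "u + v = 1"
    have p': "(snd p, fst p) \<in> C" using memC'[of "fst p" "snd p"] pq(1) by simp
    have q': "(snd q, fst q) \<in> C" using memC'[of "fst q" "snd q"] pq(2) by simp
    have "u *\<^sub>R (snd p, fst p) + v *\<^sub>R (snd q, fst q) \<in> C"
      by (rule convexD[OF conv p' q' uv])
    moreover have "u *\<^sub>R p + v *\<^sub>R q = (u * fst p + v * fst q, u * snd p + v * snd q)"
      by (simp add: prod_eq_iff)
    ultimately show "u *\<^sub>R p + v *\<^sub>R q \<in> C'" using memC' by simp
  qed
  have charg': "(y, x) \<in> C' \<longleftrightarrow> y \<le> a \<and> 0 \<le> x \<and> x \<le> g y" if y0: "0 < y" for x y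
  proof (rule char_region[OF cptC' convC' _ _ _ a_pos _ _ _ y0])
    show "0 \<le> x \<and> 0 \<le> y" if "(x, y) \<in> C'" for x y using Q1 that memC' by auto
    show "(0, 0) \<in> C'" using origC memC' by simp
    show "(a, 0) \<in> C'" using aC memC' by simp
    show "(x, 0) \<notin> C'" if "a < x" for x using beyond_a[OF that] memC' by simp
    show "(x, g x) \<in> C'" if "0 \<le> x" "x \<le> a" for x using GCg[OF that] memC' by simp
    fix x y assume h: "(x, y) \<in> C'" "x \<noteq> 0" "y \<noteq> 0" "\<forall>e>0. \<exists>q. q \<notin> C' \<and> dist q (x, y) < e"
    have "\<forall>e>0. \<exists>q. q \<notin> C \<and> dist q (y, x) < e"
    proof (intro allI impI)
      fix e :: real assume "e > 0"
      then obtain q where q: "q \<notin> C'" "dist q (x, y) < e" using h(4) by blast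
      have "(snd q, fst q) \<notin> C" using q(1) memC'[of "fst q" "snd q"] by simp
      moreover have "dist (snd q, fst q) (y, x) = dist q (x, y)"
        by (cases q) (simp add: dist_Pair_Pair add.commute)
      ultimately show "\<exists>q. q \<notin> C \<and> dist q (y, x) < e" using q(2) by metis
    qed
    then have "(y, x) \<in> outer_face C" using inof h memC' by simp
    then show "0 \<le> x \<and> x \<le> a \<and> y = g x" using graph_g by auto
  qed
  have charg: "(x, y) \<in> C \<longleftrightarrow> y \<le> a \<and> 0 \<le> x \<and> x \<le> g y" if y0: "0 < y" for x y
    using charg'[OF y0, of x] memC' by simp
  have fbd: "0 \<le> f x \<and> f x \<le> \<delta>" if "0 < x" "x \<le> b" for x
    using Q1[OF GCf[of x]] that by simp
  have gbd: "0 \<le> g y \<and> g y \<le> \<delta>" if "0 < y" "y \<le> a" for y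
    using Q1[OF GCg[of y]] that by simp
  have fmono: "f x2 \<le> f x1" if "0 < x1" "x1 \<le> x2" "x2 \<le> b" for x1 x2
  proof (cases "f x2 > 0")
    case True
    have "(x2, f x2) \<in> C" using GCf that by simp
    then have "f x2 \<le> a \<and> x2 \<le> g (f x2)" using charg[OF True] by simp
    then have "(x1, f x2) \<in> C" using charg[OF True] that by simp
    then show ?thesis using charf[OF that(1)] by simp
  next
    case False then show ?thesis using fbd[of x1] that by simp
  qed
  have gmono: "g y2 \<le> g y1" if "0 < y1" "y1 \<le> y2" "y2 \<le> a" for y1 y2
  proof (cases "g y2 > 0")
    case True
    have "(g y2, y2) \<in> C" using GCg that by simp
    then have "g y2 \<le> b \<and> y2 \<le> f (g y2)" using charf[OF True] by simp
    then have "(g y2, y1) \<in> C" using charf[OF True] that by simp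
    then show ?thesis using charg[OF that(1)] by simp
  next
    case False then show ?thesis using gbd[of y1] that by simp
  qed
  have eb: "\<epsilon> \<le> b" using charf[OF eps, of 0] Q2[of \<epsilon> 0] eps by simp
  have ea: "\<epsilon> \<le> a" using charg[OF eps, of 0] Q2[of 0 \<epsilon>] eps by simp
  have bd: "b \<le> \<delta>" using Q1[OF bC] by simp
  have ad: "a \<le> \<delta>" using Q1[OF aC] by simp
  have fe: "\<epsilon> - x \<le> f x" if "0 < x" "x \<le> \<epsilon>" for x
    using charf[OF that(1), of "\<epsilon> - x"] Q2[of x "\<epsilon> - x"] that by simp
  have ge: "\<epsilon> - y \<le> g y" if "0 < y" "y \<le> \<epsilon>" for y
    using charg[OF that(1), of "\<epsilon> - y"] Q2[of "\<epsilon> - y" y] that by simp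
  define A where "A = integral {0..b} (\<lambda>u. u * f u)"
  define B where "B = integral {0..a} (\<lambda>u. u * g u)"
  have quadC': "0 \<le> x \<and> 0 \<le> y \<and> x + y \<le> \<delta>" if "(x, y) \<in> C'" for x y
    using Q1[of y x] that memC' by (simp add: add.commute)
  note cf = colsum_limit[OF b_pos bd eps eb charf Q1 fmono fbd fe]
  note cg = colsum_limit[OF a_pos ad eps ea charg' quadC' gmono gbd ge]
  have XA: "(\<lambda>n. real (\<Sum>I\<in>lattice_pts C n. fst I) / real n ^ 3) \<longlonglongrightarrow> A" and A0: "A > 0"
    unfolding A_def using cf by auto
  have YB': "(\<lambda>n. real (\<Sum>I\<in>lattice_pts C' n. fst I) / real n ^ 3) \<longlonglongrightarrow> B" and B0: "B > 0"
    unfolding B_def using cg by auto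
  have swapsum: "(\<Sum>I\<in>lattice_pts C' n. fst I) = (\<Sum>I\<in>lattice_pts C n. snd I)" if n: "n \<ge> 1" for n
  proof -
    have "lattice_pts C' n = (\<lambda>p. (snd p, fst p)) ` lattice_pts C n"
    proof (intro Set.set_eqI iffI)
      fix p assume "p \<in> lattice_pts C' n"
      then have "(snd p, fst p) \<in> lattice_pts C n"
        using lattice_mem[of n "fst p" "snd p" C'] lattice_mem[of n "snd p" "fst p" C] n memC' by simp
      then show "p \<in> (\<lambda>p. (snd p, fst p)) ` lattice_pts C n" by (intro image_eqI[of _ _ "(snd p, fst p)"]) auto
    next
      fix p assume "p \<in> (\<lambda>p. (snd p, fst p)) ` lattice_pts C n"
      then obtain q where q: "q \<in> lattice_pts C n" "p = (snd q, fst q)" by blast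
      then show "p \<in> lattice_pts C' n"
        using lattice_mem[of n "fst q" "snd q" C] lattice_mem[of n "snd q" "fst q" C'] n memC' by simp
    qed
    moreover have "inj_on (\<lambda>p. (snd p, fst p)) (lattice_pts C n)" by (auto simp: inj_on_def prod_eq_iff)
    ultimately show ?thesis by (simp add: sum.reindex)
  qed
  have YB: "(\<lambda>n. real (\<Sum>I\<in>lattice_pts C n. snd I) / real n ^ 3) \<longlonglongrightarrow> B"
  proof (rule Lim_transform_eventually[OF YB'])
    show "\<forall>\<^sub>F n in sequentially. real (\<Sum>I\<in>lattice_pts C' n. fst I) / real n ^ 3 = real (\<Sum>I\<in>lattice_pts C n. snd I) / real n ^ 3"
      using eventually_ge_at_top[of 1] by eventually_elim (simp add: swapsum)
  qed
  define M where "M = (\<lambda>n::nat. nat \<lceil>real n * \<delta>\<rceil>)"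
  have Mr: "real (M n) = real_of_int \<lceil>real n * \<delta>\<rceil>" for n unfolding M_def using d0 by simp
  have Mge: "real n * \<delta> \<le> real (M n)" for n unfolding Mr by (rule le_of_int_ceiling)
  have Mle: "real (M n) \<le> real n * \<delta> + 1" for n unfolding Mr by (rule of_int_ceiling_le_add_one)
  have Ssub: "lattice_pts C n \<subseteq> {..M n} \<times> {..M n}" if n: "n \<ge> 1" for n
  proof
    fix p assume p: "p \<in> lattice_pts C n"
    obtain j1 j2 where pj: "p = (j1, j2)" by (cases p)
    have n0: "real n > 0" using n by simp
    have "(real j1 / real n, real j2 / real n) \<in> C" using p pj lattice_mem[of n j1 j2 C] n by simp
    then have "real j1 / real n + real j2 / real n \<le> \<delta>" using Q1 by blast
    then have "real j1 + real j2 \<le> real n * \<delta>" using n0 by (simp add: field_simps add_divide_distrib[symmetric])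
    moreover note Mge[of n]
    ultimately have "j1 \<le> M n" "j2 \<le> M n" by linarith+
    then show "p \<in> {..M n} \<times> {..M n}" using pj by simp
  qed
  have fin: "finite (lattice_pts C n)" if "n \<ge> 1" for n
    using Ssub[OF that] by (rule finite_subset) simp
  have low: "lowerset (lattice_pts C n)" if "n \<ge> 1" for n
    unfolding lowerset_def
  proof (intro ballI allI impI)
    fix I K :: "nat \<times> nat" assume IK: "I \<in> lattice_pts C n" "fst K \<le> fst I \<and> snd K \<le> snd I"
    have "(fst I, snd I) \<in> lattice_pts C n" using IK(1) by simp
    then have "(fst K, snd K) \<in> lattice_pts C n" using lower that IK(2) by blast
    then show "K \<in> lattice_pts C n" by simp
  qed
  have card: "real (card (lattice_pts C n)) \<le> (\<delta> + 2) ^ 2 * real n ^ 2" if n: "n \<ge> 1" for n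
  proof -
    have "card (lattice_pts C n) \<le> card ({..M n} \<times> {..M n})" by (rule card_mono[OF _ Ssub[OF n]]) simp
    also have "\<dots> = (M n + 1) ^ 2" by (simp add: card_cartesian_product power2_eq_square)
    finally have "real (card (lattice_pts C n)) \<le> real ((M n + 1) ^ 2)" by (simp only: of_nat_le_iff)
    then have "real (card (lattice_pts C n)) \<le> (real (M n) + 1) ^ 2" by (simp add: add.commute)
    also have "\<dots> \<le> (real n * \<delta> + 2) ^ 2"
    proof -
      have "real (M n) + 1 \<le> real n * \<delta> + 2" using Mle[of n] by simp
      then show ?thesis by (intro power_mono) auto
    qed
    also have "\<dots> \<le> ((\<delta> + 2) * real n) ^ 2"
      using n d0 by (intro power_mono) (auto simp: algebra_simps)
    finally show ?thesis by (simp add: power_mult_distrib)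
  qed
  have K0: "(\<delta> + 2) ^ 2 > 0" using d0 by simp
  have main: "C_transfinite_diameter C (E \<times> F) = ereal (cheb E powr (A / (A + B)) * cheb F powr (B / (A + B)))"
    by (rule assembly[OF E F fin low XA YB A0 B0 K0 card])
  have tdE: "transfinite_diameter E = cheb E" by (rule td_eq_cheb[OF E])
  have tdF: "transfinite_diameter F = cheb F" by (rule td_eq_cheb[OF F])
  have part1: "C_transfinite_diameter C (E \<times> F) =
      ereal (transfinite_diameter E powr (A / (A + B)) * transfinite_diameter F powr (B / (A + B)))"
    using main tdE tdF by simp
  have part2: "C_transfinite_diameter C (E \<times> F) = ereal ((transfinite_diameter E * transfinite_diameter F) powr (1/2))"
    if AB: "A = B"
  proof -
    have "A / (A + B) = 1 / 2" "B / (A + B) = 1 / 2" using AB A0 by auto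
    then show ?thesis using part1 tdE tdF cheb_nonneg[of E] cheb_nonneg[of F] by (simp add: powr_mult)
  qed
  show ?thesis using part1 part2 unfolding A_def B_def by blast
qed

end
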